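(* Let $V$ be a vertex operator algebra. A weak $V$-module is a $C_1$-cofinite grading-restricted generalized $V$-module if and only if it is a $C_1$-cofinite $\mathbb N$-gradable weak $V$-module. That is, the category of $C_1$-cofinite $\mathbb N$-gradable weak $V$-modules equals $\mathcal C^1_V$.
   Context: A weak $V$-module $W$ is $\mathbb N$-gradable if there is a grading $W=\bigoplus_{n\in\mathbb N}W(n)$ with $v_mW(n)\subseteq W(\mathrm{wt}\,v+n-m-1)$ for homogeneous $v\in V$. $C_1(W)=\mathrm{span}\{v_{-1}w: v\in\bigoplus_{n\ge1}V_{(n)},\ w\in W\}$; $W$ is $C_1$-cofinite if $\dim W/C_1(W)<\infty$. A generalized $V$-module is a weak module that is the direct sum of generalized $L(0)$-eigenspaces $W_{[h]}$; it is grading-restricted if each $W_{[h]}$ is finite dimensional and $W_{[h+n]}=0$ for $n\in\mathbb Z$ sufficiently negative. $\mathcal C^1_V$ is the category of $C_1$-cofinite grading-restricted generalized $V$-modules. *)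

theory Defs
  imports Complex_Main
begin

text \<open>
A vertex operator on
a space W is modelled by its modes: Y u n w is the mode u_n applied to w, i.e.
Y(u,x) w = sum over n of (u_n w) x^(-n-1).
\<close>

definition fin_dim :: "(complex \<Rightarrow> 'w::ab_group_add \<Rightarrow> 'w) \<Rightarrow> 'w set \<Rightarrow> bool" where
  "fin_dim sc S \<longleftrightarrow> (\<exists>B. finite B \<and> B \<subseteq> S \<and> module.span sc B = S)"

definition direct_sum_decomp ::
  "(complex \<Rightarrow> 'w::ab_group_add \<Rightarrow> 'w) \<Rightarrow> 'i set \<Rightarrow> ('i \<Rightarrow> 'w set) \<Rightarrow> bool" where
  "direct_sum_decomp sc I A \<longleftrightarrow>
     (\<forall>i\<in>I. module.subspace sc (A i)) \<and>
     (\<forall>w. \<exists>F f. finite F \<and> F \<subseteq> I \<and> (\<forall>i\<in>F. f i \<in> A i) \<and> w = (\<Sum>i\<in>F. f i)) \<and>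
     (\<forall>F f. finite F \<and> F \<subseteq> I \<and> (\<forall>i\<in>F. f i \<in> A i) \<and> (\<Sum>i\<in>F. f i) = 0
            \<longrightarrow> (\<forall>i\<in>F. f i = 0))"

definition modes_bilinear ::
  "(complex \<Rightarrow> 'v::ab_group_add \<Rightarrow> 'v) \<Rightarrow> (complex \<Rightarrow> 'w::ab_group_add \<Rightarrow> 'w)
   \<Rightarrow> ('v \<Rightarrow> int \<Rightarrow> 'w \<Rightarrow> 'w) \<Rightarrow> bool" where
  "modes_bilinear scV scW Y \<longleftrightarrow>
     (\<forall>u n. Vector_Spaces.linear scW scW (Y u n)) \<and>
     (\<forall>n w. Vector_Spaces.linear scV scW (\<lambda>u. Y u n w))"

text \<open>Truncation: Y(u,x)w has only finitely many negative powers of x.\<close>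
definition truncation :: "('v \<Rightarrow> int \<Rightarrow> 'w \<Rightarrow> 'w::zero) \<Rightarrow> bool" where
  "truncation Y \<longleftrightarrow> (\<forall>u w. \<exists>N. \<forall>n\<ge>N. Y u n w = 0)"

text \<open>The Jacobi identity, written in components (Borcherds identity):
  for all u v in V, w in W and m n r in Z,
  sum_{i>=0} binom(m,i) (u_{r+i} v)_{m+n-i} w
   = sum_{i>=0} (-1)^i binom(r,i) (u_{m+r-i} v_{n+i} w - (-1)^r v_{n+r-i} u_{m+i} w).
  Given truncation, all sums are finite; we require equality of the partial sums
  for all sufficiently large cut-offs.\<close>
definition jacobi_identity ::
  "(complex \<Rightarrow> 'w::ab_group_add \<Rightarrow> 'w) \<Rightarrow> ('v \<Rightarrow> int \<Rightarrow> 'v \<Rightarrow> 'v)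
   \<Rightarrow> ('v \<Rightarrow> int \<Rightarrow> 'w \<Rightarrow> 'w) \<Rightarrow> bool" where
  "jacobi_identity scW YV YW \<longleftrightarrow>
     (\<forall>u v w m n r. \<exists>N. \<forall>K\<ge>N.
        (\<Sum>i<K. scW ((of_int m :: complex) gchoose i) (YW (YV u (r + int i) v) (m + n - int i) w))
      = (\<Sum>i<K. scW ((-1) ^ i * ((of_int r :: complex) gchoose i))
            (YW u (m + r - int i) (YW v (n + int i) w)
             - scW ((-1) powi r) (YW v (n + r - int i) (YW u (m + int i) w)))))"

definition is_VOA ::
  "(complex \<Rightarrow> 'v::ab_group_add \<Rightarrow> 'v) \<Rightarrow> (int \<Rightarrow> 'v set) \<Rightarrow> ('v \<Rightarrow> int \<Rightarrow> 'v \<Rightarrow> 'v)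
   \<Rightarrow> 'v \<Rightarrow> 'v \<Rightarrow> complex \<Rightarrow> bool" where
  "is_VOA sc Vg Y vac \<omega> c \<longleftrightarrow>
     vector_space sc \<and>
     direct_sum_decomp sc UNIV Vg \<and>
     (\<forall>n. fin_dim sc (Vg n)) \<and>
     (\<exists>N. \<forall>n\<le>N. Vg n = {0}) \<and>
     modes_bilinear sc sc Y \<and>
     truncation Y \<and>
     (\<forall>n v. Y vac n v = (if n = -1 then v else 0)) \<and>
     (\<forall>v. Y v (-1) vac = v \<and> (\<forall>n\<ge>0. Y v n vac = 0)) \<and>
     jacobi_identity sc Y Y \<and>
     \<omega> \<in> Vg 2 \<and>
     (\<forall>m n v. Y \<omega> (m + 1) (Y \<omega> (n + 1) v) - Y \<omega> (n + 1) (Y \<omega> (m + 1) v)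
        = sc (of_int (m - n)) (Y \<omega> (m + n + 1) v)
          + sc ((of_int m ^ 3 - of_int m) / 12 * (if m + n = 0 then 1 else 0) * c) v) \<and>
     (\<forall>n v. v \<in> Vg n \<longrightarrow> Y \<omega> 1 v = sc (of_int n) v) \<and>
     (\<forall>u n. Y (Y \<omega> 0 u) n = (\<lambda>w. sc (- of_int n) (Y u (n - 1) w)))"

definition is_weak_module ::
  "(complex \<Rightarrow> 'v::ab_group_add \<Rightarrow> 'v) \<Rightarrow> ('v \<Rightarrow> int \<Rightarrow> 'v \<Rightarrow> 'v) \<Rightarrow> 'v
   \<Rightarrow> (complex \<Rightarrow> 'w::ab_group_add \<Rightarrow> 'w) \<Rightarrow> ('v \<Rightarrow> int \<Rightarrow> 'w \<Rightarrow> 'w) \<Rightarrow> bool" where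
  "is_weak_module scV YV vac scW YW \<longleftrightarrow>
     vector_space scW \<and>
     modes_bilinear scV scW YW \<and>
     truncation YW \<and>
     (\<forall>n w. YW vac n w = (if n = -1 then w else 0)) \<and>
     jacobi_identity scW YV YW"

definition N_gradable ::
  "(int \<Rightarrow> 'v set) \<Rightarrow> (complex \<Rightarrow> 'w::ab_group_add \<Rightarrow> 'w) \<Rightarrow> ('v \<Rightarrow> int \<Rightarrow> 'w \<Rightarrow> 'w) \<Rightarrow> bool" where
  "N_gradable Vg scW YW \<longleftrightarrow>
     (\<exists>Wn :: nat \<Rightarrow> 'w set. direct_sum_decomp scW UNIV Wn \<and>
        (\<forall>k m n v w. v \<in> Vg k \<longrightarrow> w \<in> Wn n \<longrightarrow>
           (if k + int n - m - 1 \<ge> 0 then YW v m w \<in> Wn (nat (k + int n - m - 1))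
            else YW v m w = 0)))"

definition C1 ::
  "(complex \<Rightarrow> 'v::ab_group_add \<Rightarrow> 'v) \<Rightarrow> (int \<Rightarrow> 'v set) \<Rightarrow> (complex \<Rightarrow> 'w::ab_group_add \<Rightarrow> 'w)
   \<Rightarrow> ('v \<Rightarrow> int \<Rightarrow> 'w \<Rightarrow> 'w) \<Rightarrow> 'w set" where
  "C1 scV Vg scW YW = module.span scW
     {YW v (-1) w | v w. v \<in> module.span scV (\<Union>n\<in>{1..}. Vg n)}"

text \<open>dim W / C_1(W) < infinity, i.e. W = span F + C_1(W) for a finite set F.\<close>
definition C1_cofinite ::
  "(complex \<Rightarrow> 'v::ab_group_add \<Rightarrow> 'v) \<Rightarrow> (int \<Rightarrow> 'v set) \<Rightarrow> (complex \<Rightarrow> 'w::ab_group_add \<Rightarrow> 'w)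
   \<Rightarrow> ('v \<Rightarrow> int \<Rightarrow> 'w \<Rightarrow> 'w) \<Rightarrow> bool" where
  "C1_cofinite scV Vg scW YW \<longleftrightarrow>
     (\<exists>F. finite F \<and> module.span scW (F \<union> C1 scV Vg scW YW) = UNIV)"

text \<open>Generalized L(0)-eigenspace W_[h], with L(0) = omega_1.\<close>
definition gen_eigenspace ::
  "(complex \<Rightarrow> 'w::ab_group_add \<Rightarrow> 'w) \<Rightarrow> ('v \<Rightarrow> int \<Rightarrow> 'w \<Rightarrow> 'w) \<Rightarrow> 'v \<Rightarrow> complex \<Rightarrow> 'w set" where
  "gen_eigenspace scW YW \<omega> h = {w. \<exists>k. ((\<lambda>x. YW \<omega> 1 x - scW h x) ^^ k) w = 0}"

definition generalized_module ::
  "(complex \<Rightarrow> 'w::ab_group_add \<Rightarrow> 'w) \<Rightarrow> ('v \<Rightarrow> int \<Rightarrow> 'w \<Rightarrow> 'w) \<Rightarrow> 'v \<Rightarrow> bool" where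
  "generalized_module scW YW \<omega> \<longleftrightarrow> direct_sum_decomp scW UNIV (gen_eigenspace scW YW \<omega>)"

definition grading_restricted_generalized_module ::
  "(complex \<Rightarrow> 'w::ab_group_add \<Rightarrow> 'w) \<Rightarrow> ('v \<Rightarrow> int \<Rightarrow> 'w \<Rightarrow> 'w) \<Rightarrow> 'v \<Rightarrow> bool" where
  "grading_restricted_generalized_module scW YW \<omega> \<longleftrightarrow>
     generalized_module scW YW \<omega> \<and>
     (\<forall>h. fin_dim scW (gen_eigenspace scW YW \<omega> h)) \<and>
     (\<forall>h. \<exists>N. \<forall>n::int. n \<le> N \<longrightarrow> gen_eigenspace scW YW \<omega> (h + of_int n) = {0})"

end

theory Submission
  imports Defs "HOL-Computational_Algebra.Computational_Algebra"
begin


fun pev :: "(complex \<Rightarrow> 'w \<Rightarrow> 'w) \<Rightarrow> ('w \<Rightarrow> 'w) \<Rightarrow> complex list \<Rightarrow> 'w \<Rightarrow> 'w::ab_group_add" where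
  "pev sc L [] w = 0"
| "pev sc L (c # cs) w = sc c w + pev sc L cs (L w)"

locale linop = vector_space sc for sc :: "complex \<Rightarrow> 'w::ab_group_add \<Rightarrow> 'w" +
  fixes L :: "'w \<Rightarrow> 'w"
  assumes L_add: "L (x + y) = L x + L y" and L_scale: "L (sc c x) = sc c (L x)"
begin

definition peval :: "complex poly \<Rightarrow> 'w \<Rightarrow> 'w" where
  "peval p w = pev sc L (coeffs p) w"

lemma L_zero[simp]: "L 0 = 0"
  by (metis add_cancel_right_right L_add)

lemma L_diff: "L (x - y) = L x - L y"
  by (metis add_diff_cancel L_add diff_add_cancel eq_diff_eq)

lemma peval_0[simp]: "peval 0 w = 0"
  by (simp add: peval_def)

lemma peval_pCons: "peval (pCons c p) w = sc c w + peval p (L w)"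
  by (cases "p = 0 \<and> c = 0") (auto simp: peval_def cCons_def)

lemma peval_const: "peval [:c:] w = sc c w"
  by (simp add: peval_pCons)

lemma peval_1[simp]: "peval 1 w = w"
  by (simp add: one_pCons peval_const)

lemma peval_lin: "peval (p::complex poly) (x + y) = peval p x + peval p y \<and> peval p (sc c x) = sc c (peval p x) \<and> peval p 0 = 0"
proof (induction p arbitrary: x y rule: pCons_induct)
  case 0 then show ?case by simp
next
  case (pCons a p)
  then show ?case
    by (simp add: peval_pCons L_add L_scale scale_right_distrib algebra_simps)
qed

lemma peval_add_w: "peval p (x + y) = peval p x + peval p y"
  using peval_lin by blast
lemma peval_scale_w: "peval p (sc c x) = sc c (peval p x)"
  using peval_lin by blast
lemma peval_zero_w[simp]: "peval p 0 = 0"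
  using peval_lin by blast
lemma peval_diff_w: "peval p (x - y) = peval p x - peval p y"
  by (metis add_diff_cancel peval_add_w diff_add_cancel eq_diff_eq)

lemma peval_add: "peval (p + q) w = peval p w + peval q w"
proof (induction p q arbitrary: w rule: poly_induct2)
  case 0 then show ?case by simp
next
  case (pCons a p b q)
  then show ?case by (simp add: peval_pCons scale_left_distrib algebra_simps)
qed

lemma peval_smult: "peval (smult c p) w = sc c (peval p w)"
proof (induction p arbitrary: w rule: pCons_induct)
  case 0 then show ?case by simp
next
  case (pCons a p)
  then show ?case by (simp add: peval_pCons scale_right_distrib)
qed

lemma peval_L: "peval p (L w) = L (peval p w)"
proof (induction p arbitrary: w rule: pCons_induct)
  case 0 then show ?case by simp
next
  case (pCons a p)
  then show ?case by (simp add: peval_pCons L_add L_scale)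
qed

lemma peval_mult: "peval (p * q) w = peval p (peval q w)"
proof (induction p arbitrary: w rule: pCons_induct)
  case 0 then show ?case by simp
next
  case (pCons a p)
  have "peval (pCons a p * q) w = sc a (peval q w) + peval (pCons 0 (p * q)) w"
    by (simp add: peval_add peval_smult)
  also have "\<dots> = sc a (peval q w) + peval p (peval q (L w))"
    by (simp add: peval_pCons pCons.IH)
  also have "\<dots> = peval (pCons a p) (peval q w)"
    by (simp add: peval_pCons peval_L)
  finally show ?case .
qed

lemma peval_comm: "peval p (peval q w) = peval q (peval p w)"
  by (metis peval_mult mult.commute)

lemma peval_sum: "peval (\<Sum>i\<in>I. f i) w = (\<Sum>i\<in>I. peval (f i) w)"
  by (induction I rule: infinite_finite_induct) (auto simp: peval_add)

lemma peval_monom: "peval (monom c j) w = sc c ((L ^^ j) w)"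
proof (induction j arbitrary: w)
  case 0 then show ?case by (simp add: monom_0 peval_const)
next
  case (Suc j)
  then show ?case by (simp add: monom_Suc peval_pCons funpow_swap1)
qed

lemma peval_linear: "peval [:-a, 1:] w = L w - sc a w"
  by (simp add: peval_pCons peval_const scale_minus_left)

lemma peval_linpow: "peval ([:-a, 1:] ^ t) w = ((\<lambda>x. L x - sc a x) ^^ t) w"
proof (induction t arbitrary: w)
  case 0 then show ?case by simp
next
  case (Suc t)
  have "peval ([:-a, 1:] ^ Suc t) w = peval [:-a, 1:] (peval ([:-a, 1:] ^ t) w)"
    by (metis peval_mult power_Suc)
  then show ?case by (simp only: Suc peval_linear funpow.simps comp_def)
qed

definition Gs :: "complex \<Rightarrow> 'w set" where
  "Gs a = {w. \<exists>t. ((\<lambda>x. L x - sc a x) ^^ t) w = 0}"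

lemma Gs_peval: "w \<in> Gs a \<longleftrightarrow> (\<exists>t. peval ([:-a, 1:] ^ t) w = 0)"
  by (simp add: Gs_def peval_linpow)

lemma Gs_inv: "w \<in> Gs a \<Longrightarrow> peval q w \<in> Gs a"
  unfolding Gs_peval by (metis peval_comm peval_zero_w)

lemma Gs_L: "w \<in> Gs a \<Longrightarrow> L w \<in> Gs a"
  unfolding Gs_peval by (metis peval_L L_zero)

lemma Gs_subspace: "subspace (Gs a)"
proof (rule subspaceI)
  show "0 \<in> Gs a" unfolding Gs_peval by (auto intro: exI[of _ 0])
next
  fix x y assume "x \<in> Gs a" "y \<in> Gs a"
  then obtain t s where t: "peval ([:-a, 1:] ^ t) x = 0" and s: "peval ([:-a, 1:] ^ s) y = 0"
    unfolding Gs_peval by blast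
  have "peval ([:-a, 1:] ^ (t + s)) (x + y) = 0"
    by (simp add: power_add peval_mult peval_add_w t s)
       (metis peval_comm peval_zero_w t)
  then show "x + y \<in> Gs a" unfolding Gs_peval by blast
next
  fix c x assume "x \<in> Gs a"
  then show "sc c x \<in> Gs a" unfolding Gs_peval by (metis peval_scale_w scale_zero_right)
qed

lemma eig_peval: "L y = sc h y \<Longrightarrow> peval p y = sc (poly p h) y"
proof (induction p arbitrary: y rule: pCons_induct)
  case 0 then show ?case by simp
next
  case (pCons a p)
  then show ?case by (simp add: peval_pCons peval_scale_w scale_left_distrib)
qed

lemma root_aux: "peval ([:-h, 1:] ^ t) w = 0 \<Longrightarrow> peval p w = 0 \<Longrightarrow> poly p h \<noteq> 0 \<Longrightarrow> w = 0"
proof (induction t arbitrary: w)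
  case 0 then show ?case by simp
next
  case (Suc t)
  let ?y = "peval ([:-h, 1:] ^ t) w"
  have "peval [:-h, 1:] ?y = 0" using Suc.prems(1) by (metis peval_mult power_Suc)
  then have ey: "L ?y = sc h ?y" by (simp add: peval_linear)
  have "peval p ?y = 0" by (metis peval_comm peval_zero_w Suc.prems(2))
  then have "sc (poly p h) ?y = 0" using eig_peval[OF ey] by simp
  then have "?y = 0" using Suc.prems(3) by simp
  then show ?case using Suc.IH Suc.prems(2,3) by blast
qed

lemma root_lemma:
  assumes "peval p w = 0" "w \<in> Gs h" "w \<noteq> 0"
  shows "poly p h = 0"
  using assms root_aux unfolding Gs_peval by blast

lemma Gs_disj: "a \<noteq> b \<Longrightarrow> w \<in> Gs a \<Longrightarrow> w \<in> Gs b \<Longrightarrow> w = 0"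
proof (rule ccontr)
  assume ab: "a \<noteq> b" and wa: "w \<in> Gs a" and wb: "w \<in> Gs b" and nz: "w \<noteq> 0"
  obtain t where t: "peval ([:-a, 1:] ^ t) w = 0" using wa unfolding Gs_peval by blast
  have "poly ([:-a, 1:] ^ t) b = 0" using root_lemma[OF t wb nz] .
  then show False using ab by (simp add: poly_power)
qed

lemma Gs_indep:
  assumes "finite F" "\<forall>i\<in>F. f i \<in> Gs i" "(\<Sum>i\<in>F. f i) = 0"
  shows "\<forall>i\<in>F. f i = 0"
  using assms
proof (induction F arbitrary: f rule: finite_induct)
  case empty then show ?case by simp
next
  case (insert a F)
  obtain t where t: "peval ([:-a, 1:] ^ t) (f a) = 0"
    using insert.prems(1) unfolding Gs_peval by blast
  let ?Q = "peval ([:-a, 1:] ^ t)"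
  have "?Q (\<Sum>i\<in>insert a F. f i) = 0" using insert.prems(2) by simp
  moreover have "?Q (\<Sum>i\<in>insert a F. f i) = ?Q (f a) + (\<Sum>i\<in>F. ?Q (f i))"
  proof -
    have "\<And>G. finite G \<Longrightarrow> ?Q (\<Sum>i\<in>G. f i) = (\<Sum>i\<in>G. ?Q (f i))"
      subgoal for G by (induction G rule: finite_induct) (auto simp: peval_add_w)
      done
    then show ?thesis using insert.hyps by (simp add: peval_add_w)
  qed
  ultimately have "(\<Sum>i\<in>F. ?Q (f i)) = 0" using t by simp
  moreover have "\<forall>i\<in>F. ?Q (f i) \<in> Gs i" using insert.prems(1) Gs_inv by blast
  ultimately have Q0: "\<forall>i\<in>F. ?Q (f i) = 0" using insert.IH[of "\<lambda>i. ?Q (f i)"] by blast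
  have F0: "\<forall>i\<in>F. f i = 0"
  proof
    fix i assume iF: "i \<in> F"
    then have "f i \<in> Gs a" using Q0 unfolding Gs_peval by blast
    moreover have "f i \<in> Gs i" using insert.prems(1) iF by blast
    moreover have "a \<noteq> i" using insert.hyps iF by blast
    ultimately show "f i = 0" using Gs_disj by blast
  qed
  then have "f a = 0" using insert.prems(2) insert.hyps by simp
  with F0 show ?case by simp
qed

end

definition dsrep :: "('i \<Rightarrow> 'w::ab_group_add set) \<Rightarrow> 'w \<Rightarrow> bool" where
  "dsrep A w \<longleftrightarrow> (\<exists>F f. finite F \<and> (\<forall>i\<in>F. f i \<in> A i) \<and> w = (\<Sum>i\<in>F. f i))"

lemma dsrep_zero: "dsrep A 0"
  unfolding dsrep_def by (rule exI[of _ "{}"]) auto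

lemma dsrep_single: "x \<in> A i \<Longrightarrow> dsrep A x"
  unfolding dsrep_def by (rule exI[of _ "{i}"], rule exI[of _ "\<lambda>_. x"]) auto

lemma dsrep_add:
  assumes sub: "\<And>i. 0 \<in> A i \<and> (\<forall>x\<in>A i. \<forall>y\<in>A i. x + y \<in> A i)"
    and "dsrep A x" "dsrep A y"
  shows "dsrep A (x + y)"
proof -
  obtain F f where F: "finite F" "\<forall>i\<in>F. f i \<in> A i" "x = (\<Sum>i\<in>F. f i)"
    using assms(2) unfolding dsrep_def by auto
  obtain G g where G: "finite G" "\<forall>i\<in>G. g i \<in> A i" "y = (\<Sum>i\<in>G. g i)"
    using assms(3) unfolding dsrep_def by auto
  define f' where "f' i = (if i \<in> F then f i else 0)" for i
  define g' where "g' i = (if i \<in> G then g i else 0)" for i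
  have x: "x = (\<Sum>i\<in>F \<union> G. f' i)"
    unfolding F(3) f'_def using F(1) G(1) by (intro sum.mono_neutral_cong_left) auto
  have y: "y = (\<Sum>i\<in>F \<union> G. g' i)"
    unfolding G(3) g'_def using F(1) G(1) by (intro sum.mono_neutral_cong_left) auto
  have "x + y = (\<Sum>i\<in>F \<union> G. f' i + g' i)" unfolding x y by (rule sum.distrib[symmetric])
  moreover have "\<forall>i\<in>F \<union> G. f' i + g' i \<in> A i"
  proof
    fix i assume "i \<in> F \<union> G"
    have a: "f' i \<in> A i" using F(2) sub[of i] unfolding f'_def by auto
    have b: "g' i \<in> A i" using G(2) sub[of i] unfolding g'_def by auto
    show "f' i + g' i \<in> A i" using a b sub[of i] by blast
  qed
  ultimately show ?thesis unfolding dsrep_def using F(1) G(1)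
    by (intro exI[of _ "F \<union> G"] exI[of _ "\<lambda>i. f' i + g' i"]) simp
qed

lemma dsrep_sum:
  assumes sub: "\<And>i. 0 \<in> A i \<and> (\<forall>x\<in>A i. \<forall>y\<in>A i. x + y \<in> A i)"
    and "\<forall>j\<in>J. dsrep A (g j)"
  shows "dsrep A (\<Sum>j\<in>J. g j)"
  using assms(2)
proof (induction J rule: infinite_finite_induct)
  case (infinite K) then show ?case by (simp add: dsrep_zero)
next
  case empty then show ?case by (simp add: dsrep_zero)
next
  case (insert x F)
  have "dsrep A (g x)" "dsrep A (\<Sum>j\<in>F. g j)" using insert by auto
  then have "dsrep A (g x + (\<Sum>j\<in>F. g j))" by (rule dsrep_add[OF sub])
  then show ?case using insert.hyps by simp
qed


lemma bezout_lin:
  assumes "poly s a \<noteq> 0"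
  shows "\<exists>u v. u * [:-a, 1:] ^ m + v * s = (1::complex poly)"
proof -
  define c where "c = poly s a"
  define r where "r = synthetic_div s a"
  have sr: "[:-a, 1:] * r + [:c:] = s" unfolding c_def r_def by (rule synthetic_div_correct')
  have c0: "c \<noteq> 0" using assms c_def by simp
  define u1 where "u1 = smult (- 1 / c) r"
  define v1 where "v1 = [:1 / c:]"
  have b1: "u1 * [:-a, 1:] + v1 * s = 1"
  proof -
    have gen: "\<And>P Q. smult (-1/c) (r * P) + smult (1/c) (P * r + Q) = smult (1/c) Q"
      by (simp add: smult_add_right mult.commute)
    have "u1 * [:-a, 1:] + v1 * s = smult (-1/c) (r * [:-a, 1:]) + smult (1/c) ([:-a, 1:] * r + [:c:])"
      unfolding u1_def v1_def sr[symmetric] by (simp only: mult_smult_left mult_pCons_left mult_zero_left pCons_0_0 add_0_right)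
    also have "\<dots> = smult (1/c) [:c:]" by (rule gen)
    also have "\<dots> = 1" using c0 by (simp add: one_pCons)
    finally show ?thesis .
  qed
  show ?thesis
  proof (induction m)
    case 0 then show ?case by (intro exI[of _ 1] exI[of _ 0]) simp
  next
    case (Suc m)
    then obtain u v where uv: "u * [:-a, 1:] ^ m + v * s = 1" by blast
    have e1: "u * [:-a, 1:] ^ m = 1 - v * s" using uv by (simp add: eq_diff_eq)
    have e2: "u1 * [:-a, 1:] = 1 - v1 * s" using b1 by (simp add: eq_diff_eq)
    have "(u * u1) * [:-a, 1:] ^ Suc m = (u * [:-a, 1:] ^ m) * (u1 * [:-a, 1:])"
      by (simp add: algebra_simps)
    also have "\<dots> = (1 - v * s) * (1 - v1 * s)" by (simp only: e1 e2)
    finally have "(u * u1) * [:-a, 1:] ^ Suc m + (v + v1 - v * v1 * s) * s = 1"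
      by (simp add: algebra_simps)
    then show ?case by blast
  qed
qed

context linop
begin

lemma peval_diff: "peval (p - q) w = peval p w - peval q w"
  by (metis peval_add diff_add_cancel eq_diff_eq)

lemma Gs_sub': "0 \<in> Gs i \<and> (\<forall>x\<in>Gs i. \<forall>y\<in>Gs i. x + y \<in> Gs i)"
  using Gs_subspace[of i] unfolding subspace_def by blast

lemma span_gen: "p \<noteq> 0 \<Longrightarrow> peval p w = 0 \<Longrightarrow> dsrep Gs w"
proof (induction "degree p" arbitrary: p w rule: less_induct)
  case less
  show ?case
  proof (cases "degree p = 0")
    case True
    then have "p = [:coeff p 0:]" by (simp add: degree_0_id)
    then have "sc (coeff p 0) w = 0" using less.prems(2) by (metis peval_const)
    moreover have "coeff p 0 \<noteq> 0" using less.prems(1) \<open>p = [:coeff p 0:]\<close> by (metis pCons_0_0)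
    ultimately have "w = 0" by simp
    then show ?thesis by (simp add: dsrep_zero)
  next
    case False
    have "\<not> (\<exists>a l. a \<noteq> 0 \<and> l = 0 \<and> p = pCons a l)" using False by auto
    then obtain z where z: "poly p z = 0" using fundamental_theorem_of_algebra_alt by blast
    obtain s where ps: "p = [:-z, 1:] ^ order z p * s" and nd: "\<not> [:-z, 1:] dvd s"
      using order_decomp[OF less.prems(1)] by blast
    define m where "m = order z p"
    define q where "q = [:-z, 1:] ^ m"
    have ps': "p = q * s" using ps unfolding q_def m_def by simp
    have m0: "m \<noteq> 0" using z less.prems(1) order_root m_def by blast
    have sz: "poly s z \<noteq> 0" using nd by (simp add: poly_eq_0_iff_dvd)
    have s0: "s \<noteq> 0" using sz by auto
    obtain u v where uv: "u * q + v * s = 1" using bezout_lin[OF sz] unfolding q_def by blast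
    define w1 where "w1 = peval (u * q) w"
    define w2 where "w2 = peval (v * s) w"
    have ww: "w = w1 + w2" unfolding w1_def w2_def
      by (metis peval_1 peval_add uv)
    have e1: "s * (u * q) = u * p" unfolding ps' by (metis mult.assoc mult.commute)
    have "peval s w1 = peval (u * p) w"
      unfolding w1_def by (simp only: peval_mult[symmetric] e1)
    also have "\<dots> = 0" by (simp add: peval_mult less.prems(2))
    finally have sw1: "peval s w1 = 0" .
    have q0: "q \<noteq> 0" unfolding q_def by simp
    have "degree q = m" unfolding q_def using degree_linear_power[of "-z" m] by simp
    then have "degree p = m + degree s"
      using ps' s0 q0 by (simp add: degree_mult_eq)
    then have "degree s < degree p" using m0 by simp
    then have d1: "dsrep Gs w1" using less.hyps s0 sw1 by blast
    have e2: "q * (v * s) = v * p" unfolding ps' by (metis mult.assoc mult.commute)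
    have "peval q w2 = peval (v * p) w"
      unfolding w2_def by (simp only: peval_mult[symmetric] e2)
    also have "\<dots> = 0" by (simp add: peval_mult less.prems(2))
    finally have "w2 \<in> Gs z" unfolding Gs_peval q_def by blast
    then have d2: "dsrep Gs w2" by (rule dsrep_single)
    show ?thesis unfolding ww by (rule dsrep_add[OF Gs_sub' d1 d2])
  qed
qed

lemma exists_ann:
  assumes fB: "finite B" and sp: "\<And>j. (L ^^ j) w \<in> span B"
  shows "\<exists>p. p \<noteq> 0 \<and> peval p w = 0"
proof -
  define g where "g j = (L ^^ j) w" for j
  define N where "N = card B"
  show ?thesis
  proof (cases "inj_on g {..N}")
    case False
    then obtain i j where ij: "i \<noteq> j" "g i = g j" unfolding inj_on_def by blast
    define p where "p = monom (1::complex) i - monom 1 j"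
    have "coeff p i = 1" using ij unfolding p_def by simp
    then have "p \<noteq> 0" by auto
    moreover have "peval p w = 0" unfolding p_def
      using ij by (simp add: peval_diff peval_monom g_def)
    ultimately show ?thesis by blast
  next
    case True
    have card: "card (g ` {..N}) = Suc N" using True by (simp add: card_image)
    have "g ` {..N} \<subseteq> span B" using sp unfolding g_def by blast
    moreover have "\<not> card (g ` {..N}) \<le> card B" using card N_def by simp
    ultimately have "dependent (g ` {..N})" using independent_span_bound[OF fB] by blast
    then obtain T u where T: "finite T" "T \<subseteq> g ` {..N}" "(\<Sum>v\<in>T. sc (u v) v) = 0"
      and v0: "\<exists>v\<in>T. u v \<noteq> 0"
      unfolding dependent_explicit by blast
    define c where "c j = (if g j \<in> T then u (g j) else 0)" for j
    define p where "p = (\<Sum>j\<le>N. monom (c j) j)"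
    obtain v where v: "v \<in> T" "u v \<noteq> 0" using v0 by blast
    then obtain j0 where j0: "j0 \<le> N" "v = g j0" using T(2) by blast
    have "coeff p j0 = c j0" unfolding p_def by (rule coeff_sum_monom[OF j0(1)])
    then have "coeff p j0 \<noteq> 0" using v j0 unfolding c_def by simp
    then have "p \<noteq> 0" by auto
    moreover have "peval p w = 0"
    proof -
      have "peval p w = (\<Sum>j\<le>N. sc (c j) (g j))"
        unfolding p_def by (simp add: peval_sum peval_monom g_def)
      also have "\<dots> = (\<Sum>x\<in>g ` {..N}. sc (if x \<in> T then u x else 0) x)"
        using True by (simp add: sum.reindex c_def)
      also have "\<dots> = (\<Sum>x\<in>T. sc (u x) x)"
        using T(1,2) by (intro sum.mono_neutral_cong_right) auto
      finally show ?thesis using T(3) by simp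
    qed
    ultimately show ?thesis by blast
  qed
qed

lemma peval_shift:
  assumes Vadd: "\<And>x y. V (x + y) = V x + V y" and Vsc: "\<And>c x. V (sc c x) = sc c (V x)"
    and VL: "\<And>y. L (V y) = V (L y) + sc j (V y)"
  shows "peval (pcompose p [:-j, 1:]) (V y) = V (peval p y)"
proof (induction p arbitrary: y rule: pCons_induct)
  case 0
  have "V 0 = 0" by (metis Vadd add_cancel_right_right)
  then show ?case by simp
next
  case (pCons a p)
  have "peval (pcompose (pCons a p) [:-j, 1:]) (V y)
      = sc a (V y) + peval [:-j, 1:] (peval (pcompose p [:-j, 1:]) (V y))"
    by (simp only: pcompose_pCons peval_add peval_const peval_mult)
  also have "\<dots> = sc a (V y) + peval [:-j, 1:] (V (peval p y))" by (simp add: pCons.IH)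
  also have "\<dots> = sc a (V y) + V (L (peval p y))" by (simp add: peval_linear VL)
  also have "\<dots> = V (peval (pCons a p) y)" by (simp add: peval_pCons peval_L Vadd Vsc)
  finally show ?case .
qed

end

lemma fin_dim_sub:
  fixes sc :: "complex \<Rightarrow> 'w::ab_group_add \<Rightarrow> 'w"
  assumes vs: "vector_space sc" and "module.subspace sc S" "finite B" "S \<subseteq> module.span sc B"
  shows "fin_dim sc S"
proof -
  interpret vector_space sc by (rule vs)
  obtain B' where B': "B' \<subseteq> S" "independent B'" "S \<subseteq> span B'"
    using maximal_independent_subset[of S] by blast
  have "finite B'" using independent_span_bound[OF assms(3) B'(2)] B'(1) assms(4) by blast
  moreover have "span B' = S" using B' assms(2) span_minimal by blast
  ultimately show ?thesis unfolding fin_dim_def using B'(1) by blast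
qed


locale dsd = vector_space sc for sc :: "complex \<Rightarrow> 'w::ab_group_add \<Rightarrow> 'w" +
  fixes A :: "'i \<Rightarrow> 'w set"
  assumes dsd: "direct_sum_decomp sc UNIV A"
begin

lemma dsd_parts: "(\<forall>i\<in>UNIV. subspace (A i))"
   "(\<forall>w. \<exists>F f. finite F \<and> F \<subseteq> UNIV \<and> (\<forall>i\<in>F. f i \<in> A i) \<and> w = (\<Sum>i\<in>F. f i))"
   "(\<forall>F f. finite F \<and> F \<subseteq> UNIV \<and> (\<forall>i\<in>F. f i \<in> A i) \<and> (\<Sum>i\<in>F. f i) = 0
            \<longrightarrow> (\<forall>i\<in>F. f i = 0))"
  using dsd unfolding direct_sum_decomp_def by argo+

lemma A_sub: "subspace (A i)"
  using dsd_parts(1) by simp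

lemma rep_ex: "\<exists>F f. finite F \<and> (\<forall>i\<in>F. f i \<in> A i) \<and> w = (\<Sum>i\<in>F. f i)"
  using dsd_parts(2) by simp

lemma indep: "finite F \<Longrightarrow> \<forall>i\<in>F. f i \<in> A i \<Longrightarrow> (\<Sum>i\<in>F. f i) = 0 \<Longrightarrow> \<forall>i\<in>F. f i = 0"
  using dsd_parts(3) by simp

lemma uniq:
  assumes F: "finite F" "\<forall>i\<in>F. f i \<in> A i" and G: "finite G" "\<forall>i\<in>G. g i \<in> A i"
    and eq: "(\<Sum>i\<in>F. f i) = (\<Sum>i\<in>G. g i)"
  shows "(if i \<in> F then f i else 0) = (if i \<in> G then g i else 0)"
proof -
  define f' where "f' i = (if i \<in> F then f i else 0)" for i
  define g' where "g' i = (if i \<in> G then g i else 0)" for i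
  have x: "(\<Sum>i\<in>F. f i) = (\<Sum>i\<in>F \<union> G. f' i)"
    unfolding f'_def using F(1) G(1) by (intro sum.mono_neutral_cong_left) auto
  have y: "(\<Sum>i\<in>G. g i) = (\<Sum>i\<in>F \<union> G. g' i)"
    unfolding g'_def using F(1) G(1) by (intro sum.mono_neutral_cong_left) auto
  have e: "(\<Sum>i\<in>F \<union> G. f' i) = (\<Sum>i\<in>F \<union> G. g' i)" using eq unfolding x y .
  have "(\<Sum>i\<in>F \<union> G. f' i - g' i) = 0" by (simp only: sum_subtractf e diff_self)
  moreover have "\<forall>i\<in>F \<union> G. f' i - g' i \<in> A i"
  proof
    fix i assume "i \<in> F \<union> G"
    have a: "f' i \<in> A i" using F(2) subspace_0[OF A_sub] unfolding f'_def by auto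
    have b: "g' i \<in> A i" using G(2) subspace_0[OF A_sub] unfolding g'_def by auto
    show "f' i - g' i \<in> A i" using subspace_diff[OF A_sub a b] .
  qed
  ultimately have "\<forall>i\<in>F \<union> G. f' i - g' i = 0" using indep[of "F \<union> G" "\<lambda>i. f' i - g' i"] F(1) G(1) by blast
  then show ?thesis unfolding f'_def g'_def by (cases "i \<in> F \<union> G") auto
qed

definition proj :: "'i \<Rightarrow> 'w \<Rightarrow> 'w" where
  "proj i w = (SOME x. \<exists>F f. finite F \<and> (\<forall>i\<in>F. f i \<in> A i) \<and> w = (\<Sum>i\<in>F. f i)
                 \<and> x = (if i \<in> F then f i else 0))"

lemma proj_rep:
  assumes "finite F" "\<forall>i\<in>F. f i \<in> A i" "w = (\<Sum>i\<in>F. f i)"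
  shows "proj i w = (if i \<in> F then f i else 0)"
proof -
  let ?P = "\<lambda>x. \<exists>F f. finite F \<and> (\<forall>i\<in>F. f i \<in> A i) \<and> w = (\<Sum>i\<in>F. f i)
                 \<and> x = (if i \<in> F then f i else 0)"
  have "?P (if i \<in> F then f i else 0)" using assms by blast
  then have "?P (proj i w)" unfolding proj_def by (rule someI)
  then obtain G g where G: "finite G" "\<forall>i\<in>G. g i \<in> A i" "w = (\<Sum>i\<in>G. g i)"
    "proj i w = (if i \<in> G then g i else 0)" by blast
  show ?thesis using uniq[OF G(1,2) assms(1,2)] G(3,4) assms(3) by simp
qed

lemma proj_in: "proj i w \<in> A i"
proof -
  obtain F f where F: "finite F" "\<forall>i\<in>F. f i \<in> A i" "w = (\<Sum>i\<in>F. f i)" using rep_ex by blast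
  show ?thesis using proj_rep[OF F] F(2) subspace_0[OF A_sub] by auto
qed

lemma proj_id: "x \<in> A i \<Longrightarrow> proj i x = x"
  using proj_rep[of "{i}" "\<lambda>_. x" x i] by simp

lemma proj_other: "x \<in> A j \<Longrightarrow> i \<noteq> j \<Longrightarrow> proj i x = 0"
  using proj_rep[of "{j}" "\<lambda>_. x" x i] by simp

lemma proj_add: "proj i (x + y) = proj i x + proj i y"
proof -
  obtain F f where F: "finite F" "\<forall>i\<in>F. f i \<in> A i" "x = (\<Sum>i\<in>F. f i)" using rep_ex by blast
  obtain G g where G: "finite G" "\<forall>i\<in>G. g i \<in> A i" "y = (\<Sum>i\<in>G. g i)" using rep_ex by blast
  define f' where "f' i = (if i \<in> F then f i else 0)" for i
  define g' where "g' i = (if i \<in> G then g i else 0)" for i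
  have x: "x = (\<Sum>i\<in>F \<union> G. f' i)"
    unfolding F(3) f'_def using F(1) G(1) by (intro sum.mono_neutral_cong_left) auto
  have y: "y = (\<Sum>i\<in>F \<union> G. g' i)"
    unfolding G(3) g'_def using F(1) G(1) by (intro sum.mono_neutral_cong_left) auto
  have xy: "x + y = (\<Sum>i\<in>F \<union> G. f' i + g' i)" unfolding x y by (rule sum.distrib[symmetric])
  have a: "\<And>i. f' i \<in> A i" using F(2) subspace_0[OF A_sub] unfolding f'_def by auto
  have b: "\<And>i. g' i \<in> A i" using G(2) subspace_0[OF A_sub] unfolding g'_def by auto
  have fin: "finite (F \<union> G)" using F(1) G(1) by simp
  have p1: "proj i (x + y) = (if i \<in> F \<union> G then f' i + g' i else 0)"
    by (intro proj_rep[OF fin _ xy] ballI subspace_add[OF A_sub a b])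
  have p2: "proj i x = (if i \<in> F \<union> G then f' i else 0)"
    by (intro proj_rep[OF fin _ x] ballI a)
  have p3: "proj i y = (if i \<in> F \<union> G then g' i else 0)"
    by (intro proj_rep[OF fin _ y] ballI b)
  show ?thesis unfolding p1 p2 p3 by (cases "i \<in> F \<union> G") simp_all
qed

lemma proj_scale: "proj i (sc c x) = sc c (proj i x)"
proof -
  obtain F f where F: "finite F" "\<forall>i\<in>F. f i \<in> A i" "x = (\<Sum>i\<in>F. f i)" using rep_ex by blast
  have e: "sc c x = (\<Sum>i\<in>F. sc c (f i))" unfolding F(3) by (rule scale_sum_right)
  have m: "\<forall>i\<in>F. sc c (f i) \<in> A i" using F(2) subspace_scale[OF A_sub] by blast
  have "proj i (sc c x) = (if i \<in> F then sc c (f i) else 0)"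
    by (rule proj_rep[OF F(1) m e])
  then show ?thesis using proj_rep[OF F] by simp
qed

lemma proj_zero[simp]: "proj i 0 = 0"
  by (metis add_cancel_right_right proj_add)

lemma proj_diff: "proj i (x - y) = proj i x - proj i y"
  by (metis add_diff_cancel proj_add diff_add_cancel eq_diff_eq)

lemma proj_sum: "proj i (\<Sum>k\<in>K. x k) = (\<Sum>k\<in>K. proj i (x k))"
  by (induction K rule: infinite_finite_induct) (auto simp: proj_add)

lemma proj_linear: "Vector_Spaces.linear sc sc (proj i)"
  by (simp add: Vector_Spaces.linear_iff vector_space_axioms proj_add proj_scale)

definition supp :: "'w \<Rightarrow> 'i set" where "supp w = {i. proj i w \<noteq> 0}"

lemma supp_finite: "finite (supp w)" and decomp: "w = (\<Sum>i\<in>supp w. proj i w)"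
proof -
  obtain F f where F: "finite F" "\<forall>i\<in>F. f i \<in> A i" "w = (\<Sum>i\<in>F. f i)" using rep_ex by blast
  have pr: "\<And>i. proj i w = (if i \<in> F then f i else 0)" using proj_rep[OF F] .
  have "supp w \<subseteq> F" unfolding supp_def using pr by auto
  then show "finite (supp w)" using F(1) finite_subset by blast
  show "w = (\<Sum>i\<in>supp w. proj i w)"
  proof -
    have "(\<Sum>i\<in>supp w. proj i w) = (\<Sum>i\<in>F. proj i w)"
      using \<open>supp w \<subseteq> F\<close> F(1) by (intro sum.mono_neutral_left) (auto simp: supp_def)
    also have "\<dots> = (\<Sum>i\<in>F. f i)" using pr by simp
    finally have "(\<Sum>i\<in>supp w. proj i w) = (\<Sum>i\<in>F. f i)" .
    then show ?thesis using F(3) by metis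
  qed
qed

lemma proj_eq0: "(\<And>i. proj i w = 0) \<Longrightarrow> w = 0"
proof -
  assume "\<And>i. proj i w = 0"
  then have "supp w = {}" unfolding supp_def by simp
  then show "w = 0" using decomp[of w] by (metis sum.empty)
qed

lemma rep_proj:
  assumes "finite F" "\<forall>i\<in>F. f i \<in> A i"
  shows "proj i (\<Sum>k\<in>F. f k) = (if i \<in> F then f i else 0)"
  using proj_rep[OF assms refl] .

end



lemma sum_single:
  assumes "finite S" "i0 \<in> S" "\<And>i. i \<in> S \<Longrightarrow> i \<noteq> i0 \<Longrightarrow> f i = 0"
  shows "sum f S = f i0"
proof -
  have "sum f S = f i0 + sum f (S - {i0})" using assms(1,2) by (rule sum.remove)
  moreover have "sum f (S - {i0}) = 0" using assms(3) by (intro sum.neutral) auto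
  ultimately show ?thesis by simp
qed

lemma coef_m2: "(-1) ^ i * ((of_int (-2) :: complex) gchoose i) = of_nat i + 1"
proof -
  have "((of_int (-2) :: complex) gchoose i) = (-1) ^ i * ((of_nat i - (-2) - 1) gchoose i)"
    by (simp add: gbinomial_negated_upper[of "-2"])
  also have "(of_nat i - (-2) - 1 :: complex) = of_nat (Suc i)" by simp
  also have "(of_nat (Suc i) :: complex) gchoose i = of_nat (Suc i choose i)"
    by (metis binomial_gbinomial)
  finally have "((of_int (-2) :: complex) gchoose i) = (-1) ^ i * of_nat (Suc i)" by simp
  then have "(-1) ^ i * ((of_int (-2) :: complex) gchoose i) = ((-1) ^ i * (-1) ^ i) * of_nat (Suc i)"
    by (simp add: mult.assoc)
  also have "(-1::complex) ^ i * (-1) ^ i = 1" by (simp add: power_mult_distrib[symmetric])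
  finally show ?thesis by simp
qed

lemma coef_1: "((of_int 1 :: complex) gchoose i) = (if i \<le> 1 then 1 else 0)"
proof -
  have "(of_nat (1 choose i) :: complex) = (of_nat 1 gchoose i)" by (rule binomial_gbinomial)
  then have "((of_int 1 :: complex) gchoose i) = of_nat (1 choose i)" by simp
  also have "\<dots> = (if i \<le> 1 then 1 else 0)" by (cases i) auto
  finally show ?thesis .
qed

lemma coef_1': "((1 :: complex) gchoose i) = (if i \<le> 1 then 1 else 0)"
  using coef_1 by simp

locale wmod =
  fixes sc :: "complex \<Rightarrow> 'v::ab_group_add \<Rightarrow> 'v" and Y :: "'v \<Rightarrow> int \<Rightarrow> 'v \<Rightarrow> 'v" and vac :: 'v
    and scW :: "complex \<Rightarrow> 'w::ab_group_add \<Rightarrow> 'w" and YW :: "'v \<Rightarrow> int \<Rightarrow> 'w \<Rightarrow> 'w"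
  assumes wm: "is_weak_module sc Y vac scW YW"
begin

lemma wm_parts: "vector_space scW" "\<forall>u n. Vector_Spaces.linear scW scW (YW u n)"
  "\<forall>n w. Vector_Spaces.linear sc scW (\<lambda>u. YW u n w)"
  "\<forall>n w. YW vac n w = (if n = -1 then w else 0)" "jacobi_identity scW Y YW"
  using wm unfolding is_weak_module_def modes_bilinear_def by argo+

sublocale W: vector_space scW by (rule wm_parts(1))

lemma YW_add: "YW u n (x + y) = YW u n x + YW u n y"
  using wm_parts(2) unfolding Vector_Spaces.linear_iff by blast
lemma YW_scale: "YW u n (scW c x) = scW c (YW u n x)"
  using wm_parts(2) unfolding Vector_Spaces.linear_iff by blast
lemma YW_zero[simp]: "YW u n 0 = 0"
  by (metis YW_add add_cancel_right_right)
lemma YW_diff: "YW u n (x - y) = YW u n x - YW u n y"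
  by (metis YW_add diff_add_cancel eq_diff_eq add_diff_cancel)
lemma YWu_add: "YW (u + v) n w = YW u n w + YW v n w"
  using wm_parts(3) unfolding Vector_Spaces.linear_iff by blast
lemma YWu_scale: "YW (sc c u) n w = scW c (YW u n w)"
  using wm_parts(3) unfolding Vector_Spaces.linear_iff by blast
lemma YWu_zero[simp]: "YW 0 n w = 0"
  by (metis YWu_add add_cancel_right_right)
lemma YW_vac: "YW vac n w = (if n = -1 then w else 0)"
  using wm_parts(4) by blast

lemma jac: "\<exists>N. \<forall>K\<ge>N.
        (\<Sum>i<K. scW ((of_int m :: complex) gchoose i) (YW (Y u (r + int i) v) (m + n - int i) w))
      = (\<Sum>i<K. scW ((-1) ^ i * ((of_int r :: complex) gchoose i))
            (YW u (m + r - int i) (YW v (n + int i) w)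
             - scW ((-1) powi r) (YW v (n + r - int i) (YW u (m + int i) w))))"
  using wm_parts(5) unfolding jacobi_identity_def by blast

lemma commutator:
  "YW u 1 (YW v n w) - YW v n (YW u 1 w) = YW (Y u 0 v) (1 + n) w + YW (Y u 1 v) n w"
proof -
  obtain N where J: "\<forall>K\<ge>N.
        (\<Sum>i<K. scW ((of_int 1 :: complex) gchoose i) (YW (Y u (0 + int i) v) (1 + n - int i) w))
      = (\<Sum>i<K. scW ((-1) ^ i * ((of_int 0 :: complex) gchoose i))
            (YW u (1 + 0 - int i) (YW v (n + int i) w)
             - scW ((-1) powi 0) (YW v (n + 0 - int i) (YW u (1 + int i) w))))"
    using jac[of 1 u 0 v n w] by blast
  define K where "K = max N 2"
  have KN: "K \<ge> N" and K2: "K \<ge> 2" unfolding K_def by auto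
  have L: "(\<Sum>i<K. scW ((of_int 1 :: complex) gchoose i) (YW (Y u (0 + int i) v) (1 + n - int i) w))
       = YW (Y u 0 v) (1 + n) w + YW (Y u 1 v) n w"
  proof -
    have "(\<Sum>i<K. scW ((of_int 1 :: complex) gchoose i) (YW (Y u (0 + int i) v) (1 + n - int i) w))
        = (\<Sum>i<2. scW ((of_int 1 :: complex) gchoose i) (YW (Y u (0 + int i) v) (1 + n - int i) w))"
      using K2 by (intro sum.mono_neutral_right) (auto simp: coef_1')
    also have "\<dots> = YW (Y u 0 v) (1 + n) w + YW (Y u 1 v) n w"
      by (simp add: numeral_2_eq_2 coef_1')
    finally show ?thesis .
  qed
  have R: "(\<Sum>i<K. scW ((-1) ^ i * ((of_int 0 :: complex) gchoose i))
            (YW u (1 + 0 - int i) (YW v (n + int i) w)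
             - scW ((-1) powi 0) (YW v (n + 0 - int i) (YW u (1 + int i) w))))
       = YW u 1 (YW v n w) - YW v n (YW u 1 w)"
  proof -
    have "(\<Sum>i<K. scW ((-1) ^ i * ((of_int 0 :: complex) gchoose i))
            (YW u (1 + 0 - int i) (YW v (n + int i) w)
             - scW ((-1) powi 0) (YW v (n + 0 - int i) (YW u (1 + int i) w))))
       = scW ((-1) ^ 0 * ((of_int 0 :: complex) gchoose 0))
            (YW u (1 + 0 - int 0) (YW v (n + int 0) w)
             - scW ((-1) powi 0) (YW v (n + 0 - int 0) (YW u (1 + int 0) w)))"
      using K2 by (intro sum_single) (auto simp: gbinomial_0_left)
    then show ?thesis by simp
  qed
  have E: "(\<Sum>i<K. scW ((of_int 1 :: complex) gchoose i) (YW (Y u (0 + int i) v) (1 + n - int i) w))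
      = (\<Sum>i<K. scW ((-1) ^ i * ((of_int 0 :: complex) gchoose i))
            (YW u (1 + 0 - int i) (YW v (n + int i) w)
             - scW ((-1) powi 0) (YW v (n + 0 - int i) (YW u (1 + int i) w))))"
    using J KN by blast
  show ?thesis using E L R by simp
qed

lemma deriv: "YW (Y u (-2) vac) n w = scW (- of_int n) (YW u (n - 1) w)"
proof -
  obtain N where J: "\<forall>K\<ge>N.
        (\<Sum>i<K. scW ((of_int 0 :: complex) gchoose i) (YW (Y u (-2 + int i) vac) (0 + n - int i) w))
      = (\<Sum>i<K. scW ((-1) ^ i * ((of_int (-2) :: complex) gchoose i))
            (YW u (0 + -2 - int i) (YW vac (n + int i) w)
             - scW ((-1) powi (-2)) (YW vac (n + -2 - int i) (YW u (0 + int i) w))))"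
    using jac[of 0 u "-2" vac n w] by blast
  define K where "K = max N (nat \<bar>n\<bar> + 2)"
  have KN: "K \<ge> N" and K2: "K \<ge> nat \<bar>n\<bar> + 2" unfolding K_def by auto
  have L: "(\<Sum>i<K. scW ((of_int 0 :: complex) gchoose i) (YW (Y u (-2 + int i) vac) (0 + n - int i) w))
     = YW (Y u (-2) vac) n w"
  proof -
    have "(\<Sum>i<K. scW ((of_int 0 :: complex) gchoose i) (YW (Y u (-2 + int i) vac) (0 + n - int i) w))
       = scW ((of_int 0 :: complex) gchoose 0) (YW (Y u (-2 + int 0) vac) (0 + n - int 0) w)"
      using K2 by (intro sum_single) (auto simp: gbinomial_0_left)
    then show ?thesis by simp
  qed
  define g where "g i = scW ((-1) ^ i * ((of_int (-2) :: complex) gchoose i))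
            (YW u (0 + -2 - int i) (YW vac (n + int i) w)
             - scW ((-1) powi (-2)) (YW vac (n + -2 - int i) (YW u (0 + int i) w)))" for i
  have g: "g i = scW (of_nat i + 1) ((if n + int i = -1 then YW u (-2 - int i) w else 0)
                 - (if n - 2 - int i = -1 then YW u (int i) w else 0))" for i
    unfolding g_def coef_m2 by (simp add: YW_vac power_int_minus)
  have R: "(\<Sum>i<K. g i) = scW (- of_int n) (YW u (n - 1) w)"
  proof (cases "n \<le> -1")
    case True
    define i0 where "i0 = nat (-1 - n)"
    have "(\<Sum>i<K. g i) = g i0"
      using K2 True by (intro sum_single) (auto simp: g i0_def)
    also have "g i0 = scW (- of_int n) (YW u (n - 1) w)"
      using True unfolding g i0_def
      by (simp add: of_nat_nat)
    finally show ?thesis .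
  next
    case False
    show ?thesis
    proof (cases "n = 0")
      case True
      have "(\<Sum>i<K. g i) = 0" by (intro sum.neutral) (auto simp: g True)
      then show ?thesis using True by simp
    next
      case False
      with \<open>\<not> n \<le> -1\<close> have n1: "n \<ge> 1" by simp
      define i1 where "i1 = nat (n - 1)"
      have "(\<Sum>i<K. g i) = g i1"
        using K2 n1 by (intro sum_single) (auto simp: g i1_def)
      also have "g i1 = scW (- of_int n) (YW u (n - 1) w)"
        using n1 unfolding g i1_def
        by (simp add: of_nat_nat W.scale_minus_left)
      finally show ?thesis .
    qed
  qed
  have E: "(\<Sum>i<K. scW ((of_int 0 :: complex) gchoose i) (YW (Y u (-2 + int i) vac) (0 + n - int i) w))
      = (\<Sum>i<K. g i)"
    unfolding g_def using J KN by blast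
  show ?thesis using E L R by simp
qed

end


locale vsetup = wmod sc Y vac scW YW for sc Y vac and scW :: "complex \<Rightarrow> 'w::ab_group_add \<Rightarrow> 'w" and YW +
  fixes Vg :: "int \<Rightarrow> 'v::ab_group_add set" and \<omega> :: 'v and c :: complex
  assumes voa: "is_VOA sc Vg Y vac \<omega> c"
begin

lemma voa_parts: "vector_space sc" "\<forall>n. fin_dim sc (Vg n)" "\<omega> \<in> Vg 2"
  "\<forall>n v. v \<in> Vg n \<longrightarrow> Y \<omega> 1 v = sc (of_int n) v"
  "\<forall>u n. Y (Y \<omega> 0 u) n = (\<lambda>w. sc (- of_int n) (Y u (n - 1) w))"
  "\<forall>v. Y v (-1) vac = v \<and> (\<forall>n\<ge>0. Y v n vac = 0)"
  "direct_sum_decomp sc UNIV Vg"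
  using voa unfolding is_VOA_def by argo+

sublocale V: vector_space sc by (rule voa_parts(1))

lemma omega0: "Y \<omega> 0 u = Y u (-2) vac"
proof -
  have "Y \<omega> 0 u = Y (Y \<omega> 0 u) (-1) vac" using voa_parts(6) by simp
  also have "\<dots> = sc (- of_int (-1)) (Y u (-1 - 1) vac)" using voa_parts(5) by simp
  finally show ?thesis by simp
qed

lemma L0_comm:
  assumes "v \<in> Vg k"
  shows "YW \<omega> 1 (YW v n x) = YW v n (YW \<omega> 1 x) + scW (of_int (k - n - 1)) (YW v n x)"
proof -
  have "YW \<omega> 1 (YW v n x) - YW v n (YW \<omega> 1 x) = YW (Y \<omega> 0 v) (1 + n) x + YW (Y \<omega> 1 v) n x"
    by (rule commutator)
  also have "YW (Y \<omega> 0 v) (1 + n) x = scW (- of_int (1 + n)) (YW v n x)"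
    unfolding omega0 deriv by simp
  also have "YW (Y \<omega> 1 v) n x = scW (of_int k) (YW v n x)"
    using voa_parts(4) assms by (simp add: YWu_scale)
  also have "scW (- of_int (1 + n)) (YW v n x) + scW (of_int k) (YW v n x)
      = scW (of_int (k - n - 1)) (YW v n x)"
    by (simp add: W.scale_left_distrib[symmetric])
  finally show ?thesis by (simp add: algebra_simps)
qed

sublocale lin: linop scW "YW \<omega> 1"
  by unfold_locales (simp_all add: YW_add YW_scale)

lemma gen_eq: "gen_eigenspace scW YW \<omega> h = lin.Gs h"
  unfolding gen_eigenspace_def lin.Gs_def by simp

lemma Gs_shift_pow:
  assumes "v \<in> Vg k"
  shows "((\<lambda>x. YW \<omega> 1 x - scW (h + of_int (k - n - 1)) x) ^^ t) (YW v n y)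
       = YW v n (((\<lambda>x. YW \<omega> 1 x - scW h x) ^^ t) y)"
proof (induction t)
  case 0 then show ?case by simp
next
  case (Suc t)
  define z where "z = ((\<lambda>x. YW \<omega> 1 x - scW h x) ^^ t) y"
  have "((\<lambda>x. YW \<omega> 1 x - scW (h + of_int (k - n - 1)) x) ^^ Suc t) (YW v n y)
      = YW \<omega> 1 (YW v n z) - scW (h + of_int (k - n - 1)) (YW v n z)"
    using Suc unfolding z_def by simp
  also have "\<dots> = YW v n (YW \<omega> 1 z) - scW h (YW v n z)"
    unfolding L0_comm[OF assms] by (simp add: W.scale_left_distrib algebra_simps)
  also have "\<dots> = YW v n (YW \<omega> 1 z - scW h z)" by (simp add: YW_diff YW_scale)
  finally show ?case unfolding z_def by simp
qed

lemma Gs_shift: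
  assumes "v \<in> Vg k" "y \<in> lin.Gs h" shows "YW v n y \<in> lin.Gs (h + of_int (k - n - 1))"
proof -
  obtain t where t: "((\<lambda>x. YW \<omega> 1 x - scW h x) ^^ t) y = 0" using assms(2) unfolding lin.Gs_def by blast
  have "((\<lambda>x. YW \<omega> 1 x - scW (h + of_int (k - n - 1)) x) ^^ t) (YW v n y) = 0"
    unfolding Gs_shift_pow[OF assms(1)] t by simp
  then show ?thesis unfolding lin.Gs_def by blast
qed

lemma YW_sum: "YW v n (\<Sum>i\<in>S. f i) = (\<Sum>i\<in>S. YW v n (f i))"
  by (induction S rule: infinite_finite_induct) (auto simp: YW_add)

end


locale dir1 = vsetup +
  assumes gr: "grading_restricted_generalized_module scW YW \<omega>"
begin

lemma gr_parts: "direct_sum_decomp scW UNIV lin.Gs"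
  "\<forall>h. \<exists>N. \<forall>n::int. n \<le> N \<longrightarrow> lin.Gs (h + of_int n) = {0}"
  using gr unfolding grading_restricted_generalized_module_def generalized_module_def gen_eq
  by argo+

sublocale G: dsd scW lin.Gs by unfold_locales (rule gr_parts(1))

definition deg :: "complex \<Rightarrow> nat" where
  "deg h = (GREATEST d. lin.Gs (h - of_nat d) \<noteq> {0})"

lemma deg_bound:
  assumes "lin.Gs x \<noteq> {0}"
  shows "\<exists>M. \<forall>d. lin.Gs (x - of_nat d) \<noteq> {0} \<longrightarrow> d \<le> M"
proof -
  obtain N where N: "\<forall>n::int. n \<le> N \<longrightarrow> lin.Gs (x + of_int n) = {0}" using gr_parts(2) by blast
  have "lin.Gs (x - of_nat d) \<noteq> {0} \<Longrightarrow> d \<le> nat (- N)" for d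
  proof (rule ccontr)
    assume a: "lin.Gs (x - of_nat d) \<noteq> {0}" "\<not> d \<le> nat (- N)"
    then have "- int d \<le> N" by linarith
    then have "lin.Gs (x + of_int (- int d)) = {0}" using N by blast
    then show False using a(1) by simp
  qed
  then show ?thesis by blast
qed

lemma deg_prop:
  assumes "lin.Gs x \<noteq> {0}"
  shows "lin.Gs (x - of_nat (deg x)) \<noteq> {0}" "\<And>d. lin.Gs (x - of_nat d) \<noteq> {0} \<Longrightarrow> d \<le> deg x"
proof -
  obtain M where M: "\<forall>d. lin.Gs (x - of_nat d) \<noteq> {0} \<longrightarrow> d \<le> M" using deg_bound[OF assms] by blast
  have P0: "lin.Gs (x - of_nat 0) \<noteq> {0}" using assms by simp
  show "lin.Gs (x - of_nat (deg x)) \<noteq> {0}"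
    unfolding deg_def by (rule GreatestI_nat[where P="\<lambda>d. lin.Gs (x - of_nat d) \<noteq> {0}", OF P0]) (use M in blast)
  show "\<And>d. lin.Gs (x - of_nat d) \<noteq> {0} \<Longrightarrow> d \<le> deg x"
    unfolding deg_def by (rule Greatest_le_nat[where P="\<lambda>d. lin.Gs (x - of_nat d) \<noteq> {0}"]) (use M in blast)+
qed

lemma deg_ge:
  assumes "lin.Gs x \<noteq> {0}" "lin.Gs (x + of_int j) \<noteq> {0}"
  shows "int (deg x) + j \<ge> 0"
proof (cases "j \<ge> 0")
  case True then show ?thesis by simp
next
  case False
  have "x + of_int j = x - of_nat (nat (- j))" using False by simp
  then have "nat (- j) \<le> deg x" using deg_prop(2)[OF assms(1)] assms(2) by metis
  then show ?thesis using False by linarith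
qed

lemma deg_le:
  assumes "lin.Gs x \<noteq> {0}" "lin.Gs (x + of_int j) \<noteq> {0}"
  shows "int (deg (x + of_int j)) \<ge> int (deg x) + j"
proof -
  define D where "D = nat (int (deg x) + j)"
  have D: "int D = int (deg x) + j" unfolding D_def using deg_ge[OF assms] by simp
  have eq: "x + of_int j - of_nat D = x - of_nat (deg x)"
  proof -
    have "(of_nat D :: complex) = of_int (int (deg x) + j)" by (metis D of_int_of_nat_eq)
    then show ?thesis by simp
  qed
  have "lin.Gs (x + of_int j - of_nat D) \<noteq> {0}" unfolding eq by (rule deg_prop(1)[OF assms(1)])
  then have "D \<le> deg (x + of_int j)" using deg_prop(2)[OF assms(2)] by blast
  then show ?thesis using D by linarith
qed

lemma deg_shift:
  assumes "lin.Gs x \<noteq> {0}" "lin.Gs (x + of_int j) \<noteq> {0}"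
  shows "int (deg (x + of_int j)) = int (deg x) + j"
proof -
  have a: "int (deg (x + of_int j)) \<ge> int (deg x) + j" by (rule deg_le[OF assms])
  have e: "x + of_int j + of_int (- j) = x" by simp
  have "int (deg (x + of_int j + of_int (- j))) \<ge> int (deg (x + of_int j)) + (- j)"
    by (rule deg_le) (use assms e in simp_all)
  then show ?thesis using a e by simp
qed

lemma proj_in_Gs: "G.proj h w \<in> lin.Gs h"
  by (rule G.proj_in)

lemma proj_proj: "G.proj h' (G.proj h w) = (if h' = h then G.proj h w else 0)"
  using G.proj_id[OF proj_in_Gs] G.proj_other[OF proj_in_Gs] by simp

definition Wn where
  "Wn n = {w. \<forall>h. G.proj h w \<noteq> 0 \<longrightarrow> deg h = n}"

lemma Wn_sub: "W.subspace (Wn n)"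
proof (rule W.subspaceI)
  show "0 \<in> Wn n" unfolding Wn_def by simp
next
  fix x y assume xy: "x \<in> Wn n" "y \<in> Wn n"
  show "x + y \<in> Wn n" unfolding Wn_def mem_Collect_eq
  proof (intro allI impI)
    fix h assume "G.proj h (x + y) \<noteq> 0"
    then have "G.proj h x \<noteq> 0 \<or> G.proj h y \<noteq> 0" by (auto simp: G.proj_add)
    then show "deg h = n" using xy unfolding Wn_def by blast
  qed
next
  fix c x assume "x \<in> Wn n"
  then show "scW c x \<in> Wn n" unfolding Wn_def by (auto simp: G.proj_scale)
qed

lemma Wn_dsd: "direct_sum_decomp scW UNIV Wn"
  unfolding direct_sum_decomp_def
proof (intro conjI allI impI ballI)
  show "W.subspace (Wn n)" for n by (rule Wn_sub)
next
  fix w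
  define S where "S = G.supp w"
  have fS: "finite S" unfolding S_def by (rule G.supp_finite)
  define f where "f n = (\<Sum>h\<in>{h\<in>S. deg h = n}. G.proj h w)" for n
  have "w = (\<Sum>h\<in>S. G.proj h w)" unfolding S_def by (rule G.decomp)
  also have "\<dots> = (\<Sum>n\<in>deg ` S. f n)" unfolding f_def using fS by (rule sum.image_gen)
  finally have w: "w = (\<Sum>n\<in>deg ` S. f n)" .
  have "f n \<in> Wn n" for n
  proof -
    have "G.proj h' (f n) = (if h' \<in> {h\<in>S. deg h = n} then G.proj h' w else 0)" for h'
    proof -
      have "G.proj h' (f n) = (\<Sum>h\<in>{h\<in>S. deg h = n}. (if h' = h then G.proj h w else 0))"
        unfolding f_def G.proj_sum proj_proj ..
      also have "\<dots> = (if h' \<in> {h\<in>S. deg h = n} then G.proj h' w else 0)"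
        using fS by (simp add: sum.delta)
      finally show ?thesis .
    qed
    then show ?thesis unfolding Wn_def by auto
  qed
  then show "\<exists>F f. finite F \<and> F \<subseteq> UNIV \<and> (\<forall>i\<in>F. f i \<in> Wn i) \<and> w = sum f F"
    using w fS by blast
next
  fix F :: "nat set" and f i
  assume a: "finite F \<and> F \<subseteq> UNIV \<and> (\<forall>i\<in>F. f i \<in> Wn i) \<and> sum f F = 0" and iF: "i \<in> F"
  have "G.proj h (f i) = 0" for h
  proof (cases "deg h = i")
    case False then show ?thesis using a iF unfolding Wn_def by blast
  next
    case True
    have "0 = G.proj h (sum f F)" using a by simp
    also have "\<dots> = (\<Sum>j\<in>F. G.proj h (f j))" by (rule G.proj_sum)
    also have "\<dots> = G.proj h (f i)"
    proof (rule sum_single)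
      show "finite F" using a by blast
      show "i \<in> F" by (rule iF)
      fix j assume "j \<in> F" "j \<noteq> i"
      then show "G.proj h (f j) = 0" using a True unfolding Wn_def by blast
    qed
    finally show ?thesis by simp
  qed
  then show "f i = 0" by (rule G.proj_eq0)
qed

lemma Wn_grading:
  assumes v: "v \<in> Vg k" and w: "w \<in> Wn n"
  shows "if k + int n - m - 1 \<ge> 0 then YW v m w \<in> Wn (nat (k + int n - m - 1)) else YW v m w = 0"
proof -
  define j where "j = k - m - 1"
  define S where "S = G.supp w"
  have fS: "finite S" unfolding S_def by (rule G.supp_finite)
  define y where "y h = YW v m (G.proj h w)" for h
  have yG: "y h \<in> lin.Gs (h + of_int j)" for h
    unfolding y_def j_def by (rule Gs_shift[OF v proj_in_Gs])
  have Y: "YW v m w = (\<Sum>h\<in>S. y h)"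
    unfolding y_def S_def by (subst G.decomp[of w]) (rule YW_sum)
  have key: "G.proj h' (YW v m w) \<noteq> 0 \<Longrightarrow> int (deg h') = int n + j" for h'
  proof -
    assume nz: "G.proj h' (YW v m w) \<noteq> 0"
    have "G.proj h' (YW v m w) = (\<Sum>h\<in>S. G.proj h' (y h))" unfolding Y by (rule G.proj_sum)
    then obtain h where hS: "h \<in> S" and nz2: "G.proj h' (y h) \<noteq> 0"
      using nz by (metis (mono_tags, lifting) sum.neutral)
    have hh: "h' = h + of_int j"
    proof (rule ccontr)
      assume "h' \<noteq> h + of_int j"
      then have "G.proj h' (y h) = 0" using G.proj_other[OF yG] by blast
      then show False using nz2 by simp
    qed
    have yn: "y h \<noteq> 0" using nz2 by auto
    have pn: "G.proj h w \<noteq> 0" using hS unfolding S_def G.supp_def by simp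
    have g1: "lin.Gs h \<noteq> {0}" using pn proj_in_Gs[of h w] by auto
    have g2: "lin.Gs (h + of_int j) \<noteq> {0}" using yn yG[of h] by auto
    have dh: "deg h = n" using w pn unfolding Wn_def by blast
    show ?thesis using deg_shift[OF g1 g2] dh hh by simp
  qed
  show ?thesis
  proof (cases "k + int n - m - 1 \<ge> 0")
    case True
    have "YW v m w \<in> Wn (nat (k + int n - m - 1))"
      unfolding Wn_def using key True j_def by force
    then show ?thesis using True by simp
  next
    case False
    have "G.proj h' (YW v m w) = 0" for h'
      using key[of h'] False j_def by force
    then have "YW v m w = 0" by (rule G.proj_eq0)
    then show ?thesis using False by simp
  qed
qed

theorem dir1_thm: "N_gradable Vg scW YW"
  unfolding N_gradable_def using Wn_dsd Wn_grading by blast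

end


context vsetup
begin

lemma bilin_span:
  assumes "x \<in> V.span X" "y \<in> W.span Z"
  shows "YW x m y \<in> W.span ((\<lambda>(a, b). YW a m b) ` (X \<times> Z))"
  using assms(1)
proof (induction x rule: V.span_induct_alt)
  case base then show ?case by (simp add: W.span_zero)
next
  case (step c a x)
  have "YW a m y \<in> W.span ((\<lambda>(a, b). YW a m b) ` (X \<times> Z))"
    using assms(2)
  proof (induction y rule: W.span_induct_alt)
    case base then show ?case by (simp add: W.span_zero)
  next
    case (step d z y)
    have "YW a m z \<in> (\<lambda>(a, b). YW a m b) ` (X \<times> Z)" using \<open>a \<in> X\<close> step(1) by force
    then have "scW d (YW a m z) \<in> W.span ((\<lambda>(a, b). YW a m b) ` (X \<times> Z))"
      by (intro W.span_scale W.span_base)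
    then show ?case using step(2) by (simp add: YW_add YW_scale W.span_add)
  qed
  then show ?case using step(2) by (simp add: YWu_add YWu_scale W.span_add W.span_scale)
qed

end

locale dir2 = vsetup +
  assumes cof: "C1_cofinite sc Vg scW YW" and ng: "N_gradable Vg scW YW"
begin

definition Wn where "Wn = (SOME Wn. direct_sum_decomp scW UNIV Wn \<and>
        (\<forall>k m n v w. v \<in> Vg k \<longrightarrow> w \<in> Wn n \<longrightarrow>
           (if k + int n - m - 1 \<ge> 0 then YW v m w \<in> Wn (nat (k + int n - m - 1))
            else YW v m w = 0)))"

lemma Wn_props: "direct_sum_decomp scW UNIV Wn"
  "\<And>k m n v w. v \<in> Vg k \<Longrightarrow> w \<in> Wn n \<Longrightarrow>
           (if k + int n - m - 1 \<ge> 0 then YW v m w \<in> Wn (nat (k + int n - m - 1))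
            else YW v m w = 0)"
proof -
  have ex: "\<exists>Wn. direct_sum_decomp scW UNIV Wn \<and>
        (\<forall>k m n v w. v \<in> Vg k \<longrightarrow> w \<in> Wn n \<longrightarrow>
           (if k + int n - m - 1 \<ge> 0 then YW v m w \<in> Wn (nat (k + int n - m - 1))
            else YW v m w = 0))" using ng unfolding N_gradable_def by blast
  have "direct_sum_decomp scW UNIV Wn \<and>
        (\<forall>k m n v w. v \<in> Vg k \<longrightarrow> w \<in> Wn n \<longrightarrow>
           (if k + int n - m - 1 \<ge> 0 then YW v m w \<in> Wn (nat (k + int n - m - 1))
            else YW v m w = 0))" unfolding Wn_def by (rule someI_ex[OF ex])
  then show "direct_sum_decomp scW UNIV Wn"
    "\<And>k m n v w. v \<in> Vg k \<Longrightarrow> w \<in> Wn n \<Longrightarrow>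
           (if k + int n - m - 1 \<ge> 0 then YW v m w \<in> Wn (nat (k + int n - m - 1))
            else YW v m w = 0)" by blast+
qed

sublocale P: dsd scW Wn by unfold_locales (rule Wn_props(1))

definition Fc where "Fc = (SOME F. finite F \<and> W.span (F \<union> C1 sc Vg scW YW) = UNIV)"

lemma Fc_props: "finite Fc" "W.span (Fc \<union> C1 sc Vg scW YW) = UNIV"
proof -
  have ex: "\<exists>F. finite F \<and> W.span (F \<union> C1 sc Vg scW YW) = UNIV"
    using cof unfolding C1_cofinite_def by blast
  have "finite Fc \<and> W.span (Fc \<union> C1 sc Vg scW YW) = UNIV" unfolding Fc_def by (rule someI_ex[OF ex])
  then show "finite Fc" "W.span (Fc \<union> C1 sc Vg scW YW) = UNIV" by blast+
qed

lemma L0_pres: "w \<in> Wn n \<Longrightarrow> YW \<omega> 1 w \<in> Wn n"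
  using Wn_props(2)[OF voa_parts(3), of w n 1] by simp

lemma raise:
  assumes "v \<in> Vg k" "k \<ge> 1" "w \<in> Wn n"
  shows "YW v (-1) w \<in> Wn (n + nat k)"
proof -
  have "k + int n - (-1) - 1 \<ge> 0" using assms(2) by simp
  then have "YW v (-1) w \<in> Wn (nat (k + int n - (-1) - 1))" using Wn_props(2)[OF assms(1,3), of "-1"] by simp
  moreover have "nat (k + int n - (-1) - 1) = n + nat k" using assms(2) by simp
  ultimately show ?thesis by simp
qed

lemma proj_L0: "P.proj n (YW \<omega> 1 w) = YW \<omega> 1 (P.proj n w)"
proof -
  define S where "S = P.supp w"
  have fS: "finite S" unfolding S_def by (rule P.supp_finite)
  have "YW \<omega> 1 w = (\<Sum>i\<in>S. YW \<omega> 1 (P.proj i w))"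
    unfolding S_def by (subst P.decomp[of w]) (rule YW_sum)
  moreover have "\<forall>i\<in>S. YW \<omega> 1 (P.proj i w) \<in> Wn i" using L0_pres P.proj_in by blast
  ultimately have "P.proj n (YW \<omega> 1 w) = (if n \<in> S then YW \<omega> 1 (P.proj n w) else 0)"
    using P.rep_proj[OF fS] by simp
  moreover have "n \<notin> S \<Longrightarrow> P.proj n w = 0" unfolding S_def P.supp_def by simp
  ultimately show ?thesis by auto
qed

lemma proj_peval: "P.proj n (lin.peval p w) = lin.peval p (P.proj n w)"
proof (induction p arbitrary: w rule: pCons_induct)
  case 0 then show ?case by simp
next
  case (pCons a p)
  then show ?case by (simp add: lin.peval_pCons P.proj_add P.proj_scale proj_L0)
qed

lemma proj_V:
  assumes v: "v \<in> Vg k" and k: "k \<ge> 1"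
  shows "P.proj n (YW v (-1) w) = (if nat k \<le> n then YW v (-1) (P.proj (n - nat k) w) else 0)"
proof -
  define S where "S = P.supp w"
  have fS: "finite S" unfolding S_def by (rule P.supp_finite)
  define sh where "sh i = i + nat k" for i
  have inj: "inj_on sh S" unfolding sh_def inj_on_def by simp
  have "YW v (-1) w = (\<Sum>i\<in>S. YW v (-1) (P.proj i w))"
    unfolding S_def by (subst P.decomp[of w]) (rule YW_sum)
  also have "\<dots> = (\<Sum>j\<in>sh ` S. YW v (-1) (P.proj (j - nat k) w))"
    using inj by (simp add: sum.reindex sh_def)
  finally have e: "YW v (-1) w = (\<Sum>j\<in>sh ` S. YW v (-1) (P.proj (j - nat k) w))" .
  have m: "\<forall>j\<in>sh ` S. YW v (-1) (P.proj (j - nat k) w) \<in> Wn j"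
  proof
    fix j assume "j \<in> sh ` S"
    then obtain i where "j = i + nat k" unfolding sh_def by blast
    then show "YW v (-1) (P.proj (j - nat k) w) \<in> Wn j" using raise[OF v k P.proj_in] by simp
  qed
  have fS': "finite (sh ` S)" using fS by simp
  have r: "P.proj n (YW v (-1) w) = (if n \<in> sh ` S then YW v (-1) (P.proj (n - nat k) w) else 0)"
    unfolding e by (rule P.rep_proj[OF fS' m])
  show ?thesis
  proof (cases "nat k \<le> n")
    case True
    show ?thesis
    proof (cases "n \<in> sh ` S")
      case True then show ?thesis using r \<open>nat k \<le> n\<close> by simp
    next
      case False
      then have "n - nat k \<notin> S" using True unfolding sh_def by force
      then have "P.proj (n - nat k) w = 0" unfolding S_def P.supp_def by simp
      then show ?thesis using r by simp
    qed
  next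
    case False
    then have "n \<notin> sh ` S" unfolding sh_def by auto
    then show ?thesis using r False by simp
  qed
qed

definition Gen :: "nat \<Rightarrow> _ set" where
  "Gen n = P.proj n ` Fc \<union> {YW b (-1) y | b y k. 1 \<le> k \<and> k \<le> n \<and> b \<in> Vg (int k) \<and> y \<in> Wn (n - k)}"

lemma C1_sub: "W.span (Fc \<union> C1 sc Vg scW YW) \<subseteq>
   W.span (Fc \<union> {YW v (-1) w | v w. v \<in> V.span (\<Union>n\<in>{1..}. Vg n)})"
proof -
  let ?G = "{YW v (-1) w | v w. v \<in> V.span (\<Union>n\<in>{1..}. Vg n)}"
  have "C1 sc Vg scW YW = W.span ?G" unfolding C1_def by simp
  moreover have "Fc \<union> W.span ?G \<subseteq> W.span (Fc \<union> ?G)"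
  proof -
    have a: "Fc \<union> ?G \<subseteq> W.span (Fc \<union> ?G)" by (rule W.span_superset)
    have b: "W.span ?G \<subseteq> W.span (Fc \<union> ?G)" by (rule W.span_mono) blast
    show ?thesis using a b by blast
  qed
  ultimately show ?thesis by (simp add: W.span_minimal)
qed

lemma struct: "w \<in> Wn n \<Longrightarrow> w \<in> W.span (Gen n)"
proof -
  assume wn: "w \<in> Wn n"
  let ?G = "{YW v (-1) w | v w. v \<in> V.span (\<Union>n\<in>{1..}. Vg n)}"
  have ws: "w \<in> W.span (Fc \<union> ?G)" using C1_sub Fc_props(2) by blast
  have gen: "P.proj n x \<in> W.span (Gen n)" if xin: "x \<in> Fc \<union> ?G" for x
  proof (cases "x \<in> Fc")
    case True then show ?thesis unfolding Gen_def by (intro W.span_base) blast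
  next
    case False
    then obtain v w' where x: "x = YW v (-1) w'" and v: "v \<in> V.span (\<Union>n\<in>{1..}. Vg n)"
      using xin by blast
    have "\<forall>w'. P.proj n (YW v (-1) w') \<in> W.span (Gen n)"
      using v
    proof (induction v rule: V.span_induct_alt)
      case base then show ?case by (simp add: W.span_zero)
    next
      case (step c b v)
      then obtain k where k: "k \<ge> 1" "b \<in> Vg k" by auto
      have "P.proj n (YW b (-1) w') \<in> W.span (Gen n)" for w'
      proof (cases "nat k \<le> n")
        case True
        have "YW b (-1) (P.proj (n - nat k) w') \<in> Gen n"
          unfolding Gen_def using k True P.proj_in
          by (intro UnI2 CollectI exI[of _ b] exI[of _ "P.proj (n - nat k) w'"] exI[of _ "nat k"]) simp
        then show ?thesis using proj_V[OF k(2,1)] True by (simp add: W.span_base)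
      next
        case False then show ?thesis using proj_V[OF k(2,1)] by (simp add: W.span_zero)
      qed
      then show ?case using step(2)
        by (simp add: YWu_add YWu_scale P.proj_add P.proj_scale W.span_add W.span_scale)
    qed
    then show ?thesis using x by blast
  qed
  have "P.proj n w \<in> W.span (Gen n)"
    using ws
  proof (induction w rule: W.span_induct_alt)
    case base then show ?case by (simp add: W.span_zero)
  next
    case (step c x y)
    then show ?case using gen[OF step(1)] by (simp add: P.proj_add P.proj_scale W.span_add W.span_scale)
  qed
  then show ?thesis using P.proj_id[OF wn] by simp
qed

lemma findim: "\<exists>B. finite B \<and> Wn n \<subseteq> W.span B"
proof (induction n rule: less_induct)
  case (less n)
  define Bs where "Bs m = (SOME B. finite B \<and> Wn m \<subseteq> W.span B)" for m
  have Bs: "finite (Bs m) \<and> Wn m \<subseteq> W.span (Bs m)" if "m < n" for m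
    unfolding Bs_def using less[OF that] by (rule someI_ex)
  define BV where "BV k = (SOME B. finite B \<and> B \<subseteq> Vg k \<and> V.span B = Vg k)" for k
  have BV: "finite (BV k) \<and> BV k \<subseteq> Vg k \<and> V.span (BV k) = Vg k" for k
  proof -
    have "\<exists>B. finite B \<and> B \<subseteq> Vg k \<and> V.span B = Vg k"
      using voa_parts(2) unfolding fin_dim_def by blast
    then show ?thesis unfolding BV_def by (rule someI_ex)
  qed
  define f where "f = (\<lambda>(a, b). YW a (-1) b)"
  define B where "B = P.proj n ` Fc \<union> (\<Union>k\<in>{1..n}. f ` (BV (int k) \<times> Bs (n - k)))"
  have fB: "finite B"
  proof -
    have "finite (f ` (BV (int k) \<times> Bs (n - k)))" if "k \<in> {1..n}" for k
    proof -
      have "n - k < n" using that by simp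
      then have "finite (Bs (n - k))" using Bs by blast
      moreover have "finite (BV (int k))" using BV by blast
      ultimately show ?thesis by simp
    qed
    then have "finite (\<Union>k\<in>{1..n}. f ` (BV (int k) \<times> Bs (n - k)))" by (intro finite_UN_I) simp_all
    moreover have "finite (P.proj n ` Fc)" using Fc_props(1) by simp
    ultimately show ?thesis unfolding B_def by simp
  qed
  have "Gen n \<subseteq> W.span B"
  proof
    fix x assume "x \<in> Gen n"
    then have "x \<in> P.proj n ` Fc \<or> (\<exists>b y k. x = YW b (-1) y \<and> 1 \<le> k \<and> k \<le> n \<and>
      b \<in> Vg (int k) \<and> y \<in> Wn (n - k))" unfolding Gen_def by blast
    then show "x \<in> W.span B"
    proof
      assume "x \<in> P.proj n ` Fc"
      then show ?thesis unfolding B_def by (intro W.span_base UnI1)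
    next
      assume "\<exists>b y k. x = YW b (-1) y \<and> 1 \<le> k \<and> k \<le> n \<and> b \<in> Vg (int k) \<and> y \<in> Wn (n - k)"
      then obtain b y k where 2: "x = YW b (-1) y" "1 \<le> k" "k \<le> n" "b \<in> Vg (int k)" "y \<in> Wn (n - k)"
        by blast
      have b: "b \<in> V.span (BV (int k))" using BV[of "int k"] 2(4) by simp
      have "n - k < n" using 2(2,3) by simp
      then have y: "y \<in> W.span (Bs (n - k))" using Bs[of "n - k"] 2(5) by blast
      have "x \<in> W.span (f ` (BV (int k) \<times> Bs (n - k)))"
        unfolding 2(1) f_def by (rule bilin_span[OF b y])
      moreover have "f ` (BV (int k) \<times> Bs (n - k)) \<subseteq> B"
        unfolding B_def using 2(2,3) by auto
      ultimately show ?thesis using W.span_mono by blast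
    qed
  qed
  then have "W.span (Gen n) \<subseteq> W.span B" by (simp add: W.span_minimal)
  then show ?case using struct fB by blast
qed

end


context dir2
begin

lemma Lpow_pres: "w \<in> Wn n \<Longrightarrow> (YW \<omega> 1 ^^ j) w \<in> Wn n"
  by (induction j) (simp_all add: L0_pres)

definition annp where "annp f d = (SOME p. p \<noteq> 0 \<and> lin.peval p (P.proj d f) = 0)"

lemma annp: "annp f d \<noteq> 0" "lin.peval (annp f d) (P.proj d f) = 0"
proof -
  obtain B where B: "finite B" "Wn d \<subseteq> W.span B" using findim by blast
  have "\<exists>p. p \<noteq> 0 \<and> lin.peval p (P.proj d f) = 0"
  proof (rule lin.exists_ann[OF B(1)])
    fix j show "(YW \<omega> 1 ^^ j) (P.proj d f) \<in> W.span B" using Lpow_pres[OF P.proj_in] B(2) by blast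
  qed
  then have "annp f d \<noteq> 0 \<and> lin.peval (annp f d) (P.proj d f) = 0"
    unfolding annp_def by (rule someI_ex)
  then show "annp f d \<noteq> 0" "lin.peval (annp f d) (P.proj d f) = 0" by blast+
qed

definition FD where "FD = Sigma Fc P.supp"
definition RD where "RD = {(r, d). \<exists>f. (f, d) \<in> FD \<and> poly (annp f d) r = 0}"

lemma RD_finite: "finite RD"
proof -
  have fFD: "finite FD" unfolding FD_def using Fc_props(1) P.supp_finite by simp
  have "RD \<subseteq> (\<Union>x\<in>FD. {r. poly (annp (fst x) (snd x)) r = 0} \<times> {snd x})"
  proof
    fix z assume "z \<in> RD"
    then obtain r d f where z: "z = (r, d)" "(f, d) \<in> FD" "poly (annp f d) r = 0"
      unfolding RD_def by blast
    show "z \<in> (\<Union>x\<in>FD. {r. poly (annp (fst x) (snd x)) r = 0} \<times> {snd x})"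
      using z by (intro UN_I[of "(f, d)"]) simp_all
  qed
  moreover have "finite (\<Union>x\<in>FD. {r. poly (annp (fst x) (snd x)) r = 0} \<times> {snd x})"
  proof (rule finite_UN_I[OF fFD])
    fix x show "finite ({r. poly (annp (fst x) (snd x)) r = 0} \<times> {snd x})"
      using poly_roots_finite[OF annp(1)] by simp
  qed
  ultimately show ?thesis by (rule finite_subset)
qed

definition R where "R n = {z. \<exists>x\<in>RD. z = fst x + of_nat n - of_nat (snd x)}"

definition Ann where "Ann n w \<longleftrightarrow> (\<exists>p. p \<noteq> 0 \<and> lin.peval p w = 0 \<and> (\<forall>z. poly p z = 0 \<longrightarrow> z \<in> R n))"

lemma Ann_zero: "Ann n 0"
  unfolding Ann_def by (rule exI[of _ 1]) simp

lemma Ann_step: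
  assumes "Ann n x" "Ann n y" shows "Ann n (scW a x + y)"
proof -
  obtain p where p: "p \<noteq> 0" "lin.peval p x = 0" "\<forall>z. poly p z = 0 \<longrightarrow> z \<in> R n"
    using assms(1) unfolding Ann_def by blast
  obtain q where q: "q \<noteq> 0" "lin.peval q y = 0" "\<forall>z. poly q z = 0 \<longrightarrow> z \<in> R n"
    using assms(2) unfolding Ann_def by blast
  have "lin.peval (p * q) x = lin.peval q (lin.peval p x)"
    by (metis lin.peval_mult mult.commute)
  then have a: "lin.peval (p * q) x = 0" using p(2) by simp
  have b: "lin.peval (p * q) y = 0" by (simp add: lin.peval_mult q(2))
  have c: "lin.peval (p * q) (scW a x + y) = 0"
    by (simp only: lin.peval_add_w lin.peval_scale_w a b W.scale_zero_right add_0_right)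
  have d: "p * q \<noteq> 0" using p(1) q(1) by simp
  have e: "\<forall>z. poly (p * q) z = 0 \<longrightarrow> z \<in> R n" using p(3) q(3) by simp
  show ?thesis unfolding Ann_def by (rule exI[of _ "p * q"]) (use c d e in blast)
qed

lemma Ann_span: "(\<And>g. g \<in> X \<Longrightarrow> Ann n g) \<Longrightarrow> w \<in> W.span X \<Longrightarrow> Ann n w"
proof -
  assume g: "\<And>g. g \<in> X \<Longrightarrow> Ann n g" and w: "w \<in> W.span X"
  show "Ann n w" using w
  proof (induction w rule: W.span_induct_alt)
    case base then show ?case by (rule Ann_zero)
  next
    case (step c x y) show ?case by (rule Ann_step[OF g[OF step(1)] step(2)])
  qed
qed

lemma Ann_all: "w \<in> Wn n \<Longrightarrow> Ann n w"
proof (induction n arbitrary: w rule: less_induct)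
  case (less n)
  have gen: "Ann n g" if "g \<in> Gen n" for g
  proof -
    have "g \<in> P.proj n ` Fc \<or> (\<exists>b y k. g = YW b (-1) y \<and> 1 \<le> k \<and> k \<le> n \<and>
      b \<in> Vg (int k) \<and> y \<in> Wn (n - k))" using that unfolding Gen_def by blast
    then show ?thesis
    proof
      assume "g \<in> P.proj n ` Fc"
      then obtain f where f: "f \<in> Fc" "g = P.proj n f" by blast
      show ?thesis
      proof (cases "g = 0")
        case True then show ?thesis by (simp add: Ann_zero)
      next
        case False
        then have fd: "(f, n) \<in> FD" unfolding FD_def P.supp_def using f by simp
        have roots: "\<forall>z. poly (annp f n) z = 0 \<longrightarrow> z \<in> R n"
        proof (intro allI impI)
          fix z assume zz: "poly (annp f n) z = 0"
          have "\<exists>f'. (f', n) \<in> FD \<and> poly (annp f' n) z = 0" using fd zz by blast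
          then have zn: "(z, n) \<in> RD" unfolding RD_def by simp
          show "z \<in> R n" unfolding R_def by (intro CollectI bexI[OF _ zn]) simp
        qed
        show ?thesis unfolding Ann_def f(2)
          by (rule exI[of _ "annp f n"]) (use annp(1)[of f n] annp(2)[of f n] roots in blast)
      qed
    next
      assume "\<exists>b y k. g = YW b (-1) y \<and> 1 \<le> k \<and> k \<le> n \<and> b \<in> Vg (int k) \<and> y \<in> Wn (n - k)"
      then obtain b y k where 2: "g = YW b (-1) y" "1 \<le> k" "k \<le> n" "b \<in> Vg (int k)" "y \<in> Wn (n - k)"
        by blast
      have "n - k < n" using 2(2,3) by simp
      then have "Ann (n - k) y" using less 2(5) by blast
      then obtain p where p: "p \<noteq> 0" "lin.peval p y = 0" "\<forall>z. poly p z = 0 \<longrightarrow> z \<in> R (n - k)"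
        unfolding Ann_def by blast
      define q where "q = pcompose p [:- of_nat k, 1:]"
      have VL: "YW \<omega> 1 (YW b (-1) x) = YW b (-1) (YW \<omega> 1 x) + scW (of_nat k) (YW b (-1) x)" for x
        using L0_comm[OF 2(4), of "-1" x] by simp
      have "lin.peval q (YW b (-1) y) = YW b (-1) (lin.peval p y)"
        unfolding q_def by (rule lin.peval_shift) (simp_all add: YW_add YW_scale VL)
      then have q0: "lin.peval q g = 0" using p(2) 2(1) by simp
      have dq: "degree [:- of_nat k, 1::complex:] > 0" by simp
      have qn: "q \<noteq> 0"
      proof
        assume "q = 0"
        then have "p = 0" unfolding q_def using pcompose_eq_0[OF _ dq] by blast
        then show False using p(1) by simp
      qed
      have qr: "\<forall>z. poly q z = 0 \<longrightarrow> z \<in> R n"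
      proof (intro allI impI)
        fix z assume "poly q z = 0"
        then have "poly p (z - of_nat k) = 0" unfolding q_def by (simp add: poly_pcompose)
        then have "z - of_nat k \<in> R (n - k)" using p(3) by blast
        then obtain x where x: "x \<in> RD" "z - of_nat k = fst x + of_nat (n - k) - of_nat (snd x)"
          unfolding R_def by blast
        have "z = fst x + of_nat n - of_nat (snd x)" using x(2) 2(3) by (simp add: of_nat_diff algebra_simps)
        then show "z \<in> R n" unfolding R_def using x(1) by blast
      qed
      show ?thesis unfolding Ann_def by (rule exI[of _ q]) (use q0 qn qr in blast)
    qed
  qed
  have s: "w \<in> W.span (Gen n)" by (rule struct[OF less.prems])
  show ?case by (rule Ann_span[of "Gen n" n w, OF gen s])
qed

lemma proj_Gs: "w \<in> lin.Gs h \<Longrightarrow> P.proj n w \<in> lin.Gs h"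
  unfolding lin.Gs_peval by (metis proj_peval P.proj_zero)

lemma root_in_R:
  assumes "w \<in> Wn n" "w \<in> lin.Gs h" "w \<noteq> 0"
  shows "h \<in> R n"
proof -
  obtain p where p: "p \<noteq> 0" "lin.peval p w = 0" "\<forall>z. poly p z = 0 \<longrightarrow> z \<in> R n"
    using Ann_all[OF assms(1)] unfolding Ann_def by blast
  have "poly p h = 0" by (rule lin.root_lemma[OF p(2) assms(2,3)])
  then show ?thesis using p(3) by blast
qed

lemma gen_module: "direct_sum_decomp scW UNIV lin.Gs"
  unfolding direct_sum_decomp_def
proof (intro conjI allI impI ballI)
  show "W.subspace (lin.Gs h)" for h by (rule lin.Gs_subspace)
next
  fix w
  have "\<forall>n\<in>P.supp w. dsrep lin.Gs (P.proj n w)"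
  proof
    fix n assume "n \<in> P.supp w"
    obtain p where p: "p \<noteq> 0" "lin.peval p (P.proj n w) = 0"
      using Ann_all[OF P.proj_in] unfolding Ann_def by blast
    show "dsrep lin.Gs (P.proj n w)" by (rule lin.span_gen[OF p])
  qed
  then have "dsrep lin.Gs (\<Sum>n\<in>P.supp w. P.proj n w)" by (rule dsrep_sum[OF lin.Gs_sub'])
  then have "dsrep lin.Gs w" using P.decomp[of w] by simp
  then show "\<exists>F f. finite F \<and> F \<subseteq> UNIV \<and> (\<forall>i\<in>F. f i \<in> lin.Gs i) \<and> w = sum f F"
    unfolding dsrep_def by blast
next
  fix F f i
  assume "finite F \<and> F \<subseteq> UNIV \<and> (\<forall>i\<in>F. f i \<in> lin.Gs i) \<and> sum f F = 0" "i \<in> F"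
  then show "f i = 0" using lin.Gs_indep by blast
qed

lemma Gs_fin: "fin_dim scW (lin.Gs h)"
proof -
  define Bn where "Bn n = (SOME B. finite B \<and> Wn n \<subseteq> W.span B)" for n
  have Bn: "finite (Bn n) \<and> Wn n \<subseteq> W.span (Bn n)" for n
    unfolding Bn_def using findim by (rule someI_ex)
  define S where "S = {n. h \<in> R n}"
  have "S \<subseteq> (\<lambda>x. nat \<lfloor>Re (h - fst x + of_nat (snd x))\<rfloor>) ` RD"
  proof
    fix n assume "n \<in> S"
    then obtain x where x: "x \<in> RD" "h = fst x + of_nat n - of_nat (snd x)"
      unfolding S_def R_def by blast
    then have "h - fst x + of_nat (snd x) = of_nat n" by simp
    then have "n = nat \<lfloor>Re (h - fst x + of_nat (snd x))\<rfloor>" by simp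
    then show "n \<in> (\<lambda>x. nat \<lfloor>Re (h - fst x + of_nat (snd x))\<rfloor>) ` RD" using x(1) by blast
  qed
  then have fS: "finite S" using RD_finite finite_subset by blast
  define B where "B = (\<Union>n\<in>S. Bn n)"
  have fB: "finite B" unfolding B_def using fS Bn by blast
  have "lin.Gs h \<subseteq> W.span B"
  proof
    fix w assume w: "w \<in> lin.Gs h"
    have "P.proj n w \<in> W.span B" if "n \<in> P.supp w" for n
    proof -
      have nz: "P.proj n w \<noteq> 0" using that unfolding P.supp_def by simp
      have "h \<in> R n" by (rule root_in_R[OF P.proj_in proj_Gs[OF w] nz])
      then have nS: "n \<in> S" unfolding S_def by simp
      have "P.proj n w \<in> W.span (Bn n)" using Bn P.proj_in by blast
      moreover have "Bn n \<subseteq> B" unfolding B_def using nS by blast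
      ultimately show ?thesis using W.span_mono by blast
    qed
    then have "(\<Sum>n\<in>P.supp w. P.proj n w) \<in> W.span B" by (intro W.span_sum) blast
    then show "w \<in> W.span B" using P.decomp[of w] by simp
  qed
  then show ?thesis by (rule fin_dim_sub[OF W.vector_space_axioms lin.Gs_subspace fB])
qed

lemma Gs_low: "\<exists>N. \<forall>n::int. n \<le> N \<longrightarrow> lin.Gs (h + of_int n) = {0}"
proof -
  define T where "T = (\<Sum>x\<in>RD. \<bar>Re (fst x) - real (snd x) - Re h\<bar>)"
  define N where "N = - \<lceil>T\<rceil> - 1"
  have "lin.Gs (h + of_int n) = {0}" if nN: "n \<le> N" for n
  proof (rule ccontr)
    assume "lin.Gs (h + of_int n) \<noteq> {0}"
    then obtain w where w: "w \<in> lin.Gs (h + of_int n)" "w \<noteq> 0"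
      using W.subspace_0[OF lin.Gs_subspace] by blast
    obtain m where m: "P.proj m w \<noteq> 0" using P.proj_eq0 w(2) by blast
    have "h + of_int n \<in> R m" by (rule root_in_R[OF P.proj_in proj_Gs[OF w(1)] m])
    then obtain x where x: "x \<in> RD" "h + of_int n = fst x + of_nat m - of_nat (snd x)"
      unfolding R_def by blast
    have "Re (h + of_int n) = Re (fst x) + real m - real (snd x)" using x(2) by simp
    then have e: "Re h + n = Re (fst x) + real m - real (snd x)" by simp
    have "\<bar>Re (fst x) - real (snd x) - Re h\<bar> \<le> T"
      unfolding T_def by (rule member_le_sum[OF x(1) _ RD_finite]) simp
    then have "Re (fst x) - real (snd x) - Re h \<ge> - T" by linarith
    moreover have "T \<le> \<lceil>T\<rceil>" by linarith
    moreover have "real_of_int n \<le> - \<lceil>T\<rceil> - 1" using nN unfolding N_def by linarith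
    ultimately show False using e by linarith
  qed
  then show ?thesis by blast
qed

theorem dir2_thm: "grading_restricted_generalized_module scW YW \<omega>"
  unfolding grading_restricted_generalized_module_def generalized_module_def gen_eq
  using gen_module Gs_fin Gs_low by blast

end

theorem proposition2:
  fixes scV :: "complex \<Rightarrow> 'v::ab_group_add \<Rightarrow> 'v"
    and Vg :: "int \<Rightarrow> 'v set"
    and Y :: "'v \<Rightarrow> int \<Rightarrow> 'v \<Rightarrow> 'v"
    and vac \<omega> :: 'v
    and c :: complex
    and scW :: "complex \<Rightarrow> 'w::ab_group_add \<Rightarrow> 'w"
    and YW :: "'v \<Rightarrow> int \<Rightarrow> 'w \<Rightarrow> 'w"
  assumes "is_VOA scV Vg Y vac \<omega> c"
    and "is_weak_module scV Y vac scW YW"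
  shows "(C1_cofinite scV Vg scW YW \<and> grading_restricted_generalized_module scW YW \<omega>)
     \<longleftrightarrow> (C1_cofinite scV Vg scW YW \<and> N_gradable Vg scW YW)"
proof
  assume a: "C1_cofinite scV Vg scW YW \<and> grading_restricted_generalized_module scW YW \<omega>"
  interpret dir1 scV Y vac scW YW Vg \<omega> c
    by unfold_locales (use assms a in blast)+
  show "C1_cofinite scV Vg scW YW \<and> N_gradable Vg scW YW" using a dir1_thm by blast
next
  assume a: "C1_cofinite scV Vg scW YW \<and> N_gradable Vg scW YW"
  interpret dir2 scV Y vac scW YW Vg \<omega> c
    by unfold_locales (use assms a in blast)+
  show "C1_cofinite scV Vg scW YW \<and> grading_restricted_generalized_module scW YW \<omega>"
    using a dir2_thm by blast
qed

end
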